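(* Let $\kappa\neq 2$ and $\rho\in\mathcal X_\kappa$. Suppose $\lambda\in\mathcal E(\rho)$ and $\lambda\notin\mathscr C$. Then there exists a sequence of distinct elements $Z_n\in\mathscr C$ such that $Z_n\to\lambda$ and $|\mathrm{tr}\,\rho(Z_n)|\le 2$ for all $n$.
   Context: $T$ is the one-holed torus; $\pi=\pi_1(T)$ is free on generators $X,Y$. A character is an element $\rho$ of $\mathrm{Hom}(\pi,\mathrm{SL}(2,\mathbb{C}))/\!/\mathrm{SL}(2,\mathbb{C})$, and $\mathcal X_\kappa$ is the set of characters with $\mathrm{tr}\,\rho(XYX^{-1}Y^{-1})=\kappa$. $\mathscr{C}$ is the set of free homotopy classes of essential (non-trivial, non-boundary-parallel) simple closed curves on $T$; $\mathrm{tr}\,\rho(W)$ is well defined for $W\in\mathscr C$. $\mathscr{PL}$ is the projective lamination space of $T$, identified with $\hat{\mathbb R}$ so that $\mathscr{C}$ corresponds to $\hat{\mathbb Q}$. $\Lambda\in\mathscr{PL}$ is an end invariant of $\rho$ if there exist $K>0$ and distinct $X_n\in\mathscr{C}$ with $X_n\to\Lambda$ and $|\mathrm{tr}\,\rho(X_n)|<K$; $\mathcal{E}(\rho)$ is the set of end invariants. *)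

theory Defs
  imports "HOL-Analysis.Analysis"
begin

text \<open>A representation rho of pi = F(X,Y) into SL(2,C) is determined by the pair
  (A,B) = (rho X, rho Y) with det A = det B = 1.\<close>

definition SL2 :: "complex^2^2 \<Rightarrow> bool" where
  "SL2 M \<longleftrightarrow> det M = 1"

definition sl2_inv :: "complex^2^2 \<Rightarrow> complex^2^2" where
  "sl2_inv M = vector [vector [M$2$2, - M$1$2], vector [- M$2$1, M$1$1]]"

datatype letter = LX | LXi | LY | LYi

fun eval_letter :: "complex^2^2 \<Rightarrow> complex^2^2 \<Rightarrow> letter \<Rightarrow> complex^2^2" where
  "eval_letter A B LX = A"
| "eval_letter A B LXi = sl2_inv A"
| "eval_letter A B LY = B"
| "eval_letter A B LYi = sl2_inv B"

definition eval_word :: "complex^2^2 \<Rightarrow> complex^2^2 \<Rightarrow> letter list \<Rightarrow> complex^2^2" where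
  "eval_word A B w = foldr (\<lambda>l M. eval_letter A B l ** M) w (mat 1)"

definition in_X_kappa :: "complex \<Rightarrow> complex^2^2 \<Rightarrow> complex^2^2 \<Rightarrow> bool" where
  "in_X_kappa \<kappa> A B \<longleftrightarrow> SL2 A \<and> SL2 B \<and>
     trace (eval_word A B [LX, LY, LXi, LYi]) = \<kappa>"

text \<open>An essential simple closed curve is determined (up to free homotopy and orientation)
  by its homology class \<open>\<plusminus>(a,b)\<close> with a, b coprime; we normalise to a > 0, or (a,b) = (0,1).\<close>
definition curves :: "(int \<times> int) set" where
  "curves = {(a, b). coprime a b \<and> (a > 0 \<or> (a = 0 \<and> b = 1))}"

text \<open>A representative word: the Christoffel word with a letters X and |b| letters Y
  (resp. Y^-1 if b < 0).\<close>
definition curve_word :: "int \<times> int \<Rightarrow> letter list" where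
  "curve_word c = (case c of (a, b) \<Rightarrow>
     (if a = 0 then [LY] else
      let n = nat (a + \<bar>b\<bar>); y = (if b \<ge> 0 then LY else LYi) in
      map (\<lambda>i. if \<lfloor>real i * real_of_int \<bar>b\<bar> / real n\<rfloor>
                    > \<lfloor>(real i - 1) * real_of_int \<bar>b\<bar> / real n\<rfloor> then y else LX)
          [1..<n+1]))"

definition tr_curve :: "complex^2^2 \<Rightarrow> complex^2^2 \<Rightarrow> int \<times> int \<Rightarrow> complex" where
  "tr_curve A B c = trace (eval_word A B (curve_word c))"

text \<open>PL is identified with the extended real line R-hat = R \<union> {\<infinity>}; we model it as
  \<open>real option\<close> (None = \<infinity>), with the topology of the circle via inverse stereographic
  projection.\<close>
type_synonym PL = "real option"

definition pl_emb :: "PL \<Rightarrow> real \<times> real" where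
  "pl_emb p = (case p of None \<Rightarrow> (0, 1)
      | Some t \<Rightarrow> (2 * t / (1 + t\<^sup>2), (t\<^sup>2 - 1) / (1 + t\<^sup>2)))"

definition pl_tendsto :: "(nat \<Rightarrow> PL) \<Rightarrow> PL \<Rightarrow> bool" where
  "pl_tendsto s l \<longleftrightarrow> (\<lambda>n. pl_emb (s n)) \<longlonglongrightarrow> pl_emb l"

definition slope :: "int \<times> int \<Rightarrow> PL" where
  "slope c = (case c of (a, b) \<Rightarrow> if a = 0 then None else Some (real_of_int b / real_of_int a))"

definition end_invariant :: "complex^2^2 \<Rightarrow> complex^2^2 \<Rightarrow> PL \<Rightarrow> bool" where
  "end_invariant A B \<Lambda> \<longleftrightarrow>
     (\<exists>K>0. \<exists>Xs :: nat \<Rightarrow> int \<times> int. inj Xs \<and> (\<forall>n. Xs n \<in> curves) \<and>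
        pl_tendsto (\<lambda>n. slope (Xs n)) \<Lambda> \<and> (\<forall>n. cmod (tr_curve A B (Xs n)) < K))"

end

theory Submission
  imports Defs
begin

lemma mat2_eq: fixes M N :: "complex^2^2"
  shows "M = N \<longleftrightarrow> M$1$1 = N$1$1 \<and> M$1$2 = N$1$2 \<and> M$2$1 = N$2$1 \<and> M$2$2 = N$2$2"
  by (auto simp: vec_eq_iff forall_2)

lemma mult2: fixes M N :: "complex^2^2"
  shows "(M ** N)$1$1 = M$1$1*N$1$1 + M$1$2*N$2$1"
        "(M ** N)$1$2 = M$1$1*N$1$2 + M$1$2*N$2$2"
        "(M ** N)$2$1 = M$2$1*N$1$1 + M$2$2*N$2$1"
        "(M ** N)$2$2 = M$2$1*N$1$2 + M$2$2*N$2$2"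
  by (simp_all add: matrix_matrix_mult_def sum_2)

lemma tr2: "trace (M::complex^2^2) = M$1$1 + M$2$2"
  by (simp add: trace_def sum_2)

lemma inv2: "sl2_inv M $1$1 = M$2$2" "sl2_inv M $1$2 = - M$1$2"
   "sl2_inv M $2$1 = - M$2$1" "sl2_inv M $2$2 = M$1$1"
  by (simp_all add: sl2_inv_def)

lemma mat1_2: "(mat 1 :: complex^2^2)$1$1 = 1" "(mat 1 :: complex^2^2)$1$2 = 0"
  "(mat 1 :: complex^2^2)$2$1 = 0" "(mat 1 :: complex^2^2)$2$2 = 1"
  by (simp_all add: mat_def)

lemmas m2simps = mult2 tr2 inv2 mat1_2 det_2

lemma det_inv: "det (sl2_inv M) = det (M::complex^2^2)"
  by (simp add: m2simps algebra_simps)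

lemma tr_id1: assumes "det (M::complex^2^2) = 1"
  shows "trace (M ** M ** N) + trace N = trace M * trace (M ** N)"
  using assms by (simp add: m2simps) algebra

lemma tr_id2: assumes "det (M::complex^2^2) = 1"
  shows "trace (N ** M ** M) + trace N = trace (N ** M) * trace M"
  using assms by (simp add: m2simps) algebra

lemma fricke: assumes "det (M::complex^2^2) = 1" "det N = 1"
  shows "(trace M)^2 + (trace N)^2 + (trace (M**N))^2 - trace M * trace N * trace (M ** N)
     = trace (M ** (N ** (sl2_inv M ** (sl2_inv N ** mat 1)))) + 2"
  using assms by (simp add: m2simps) algebra

lemma tr_adj: "trace (M ** sl2_inv (N::complex^2^2)) = trace M * trace N - trace (M ** N)"
  by (simp add: m2simps algebra_simps)

lemma comm_inv: assumes "det (M::complex^2^2) = 1" "det N = 1"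
  shows "trace (M ** (sl2_inv N ** (sl2_inv M ** (sl2_inv (sl2_inv N) ** mat 1))))
     = trace (M ** (N ** (sl2_inv M ** (sl2_inv N ** mat 1))))"
proof -
  have d: "det (sl2_inv N) = 1" using assms det_inv by metis
  have "trace (sl2_inv N) = trace N" by (simp add: m2simps)
  then show ?thesis using fricke[OF assms] fricke[OF assms(1) d] tr_adj[of M N]
    by (simp add: algebra_simps power2_eq_square)
qed

lemma divA:
  fixes a1 b1 a2 b2 i :: int
  assumes "a1 \<ge> 0" "b1 \<ge> 0" "a2 \<ge> 0" "b2 \<ge> 0" "a1*b2 - a2*b1 = 1"
    "a2 + b2 \<ge> 1" "0 \<le> i" "i \<le> a1 + b1"
  shows "(i*(b1+b2)) div ((a1+b1)+(a2+b2)) = (i*b1) div (a1+b1)"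
proof -
  define n1 where "n1 = a1+b1"
  define n2 where "n2 = a2+b2"
  have n1p: "n1 \<ge> 1"
  proof (rule ccontr)
    assume "\<not> n1 \<ge> 1" then have "a1 = 0" "b1 = 0" using assms unfolding n1_def by auto
    then show False using assms by simp
  qed
  define q where "q = (i*b1) div n1"
  define r where "r = (i*b1) mod n1"
  have qr: "i*b1 = n1*q + r" unfolding q_def r_def by simp
  have r0: "0 \<le> r" "r \<le> n1 - 1" unfolding r_def using n1p by auto
  have key: "n1*(i*(b1+b2)) = (n1+n2)*(i*b1) + i"
  proof -
    have "n1*(b1+b2) = (n1+n2)*b1 + 1" unfolding n1_def n2_def using assms(5) by (simp add: algebra_simps)
    then have "i*(n1*(b1+b2)) = i*((n1+n2)*b1 + 1)" by simp
    then show ?thesis by (simp add: algebra_simps)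
  qed
  have lo: "n1*((n1+n2)*q) \<le> n1*(i*(b1+b2))"
  proof -
    have "n1*(i*(b1+b2)) = (n1+n2)*(n1*q + r) + i" using key qr by simp
    then have "n1*(i*(b1+b2)) = n1*((n1+n2)*q) + (n1+n2)*r + i" by (simp add: algebra_simps)
    moreover have "(n1+n2)*r \<ge> 0" using r0 n1p assms(6) n2_def by simp
    ultimately show ?thesis using assms(7) by linarith
  qed
  have hi: "n1*(i*(b1+b2)) < n1*((n1+n2)*q + (n1+n2))"
  proof -
    have "n1*(i*(b1+b2)) = (n1+n2)*(n1*q + r) + i" using key qr by simp
    then have "n1*(i*(b1+b2)) = n1*((n1+n2)*q) + (n1+n2)*r + i" by (simp add: algebra_simps)
    moreover have "(n1+n2)*r \<le> (n1+n2)*(n1-1)" using r0 n1p assms(6) n2_def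
      by (intro mult_left_mono) auto
    moreover have "i < n1 + n2" using assms(8) assms(6) n1_def n2_def by simp
    ultimately show ?thesis by (simp add: algebra_simps)
  qed
  have "i*(b1+b2) = (n1+n2)*q + (i*(b1+b2) - (n1+n2)*q)" by simp
  have A: "(n1+n2)*q \<le> i*(b1+b2)" using lo n1p by (simp add: mult_le_cancel_left_pos)
  have B: "i*(b1+b2) < (n1+n2)*q + (n1+n2)" using hi n1p by (simp add: mult_less_cancel_left_pos)
  have "(i*(b1+b2)) div (n1+n2) = q"
    by (rule int_div_pos_eq[of _ _ _ "i*(b1+b2) - (n1+n2)*q"]) (use A B in auto)
  then show ?thesis unfolding q_def n1_def n2_def by simp
qed

lemma divB:
  fixes a1 b1 a2 b2 j :: int
  assumes "a1 \<ge> 0" "b1 \<ge> 0" "a2 \<ge> 0" "b2 \<ge> 0" "a1*b2 - a2*b1 = 1"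
    "a1 + b1 \<ge> 1" "0 \<le> j" "j \<le> a2 + b2"
  shows "(((a1+b1)+j)*(b1+b2)) div ((a1+b1)+(a2+b2)) = b1 + (j*b2) div (a2+b2)"
proof -
  define n1 where "n1 = a1+b1"
  define n2 where "n2 = a2+b2"
  have n2p: "n2 \<ge> 1"
  proof (rule ccontr)
    assume "\<not> n2 \<ge> 1" then have "a2 = 0" "b2 = 0" using assms unfolding n2_def by auto
    then show False using assms by simp
  qed
  have n1p: "n1 \<ge> 1" using assms n1_def by simp
  define q where "q = (j*b2) div n2"
  define r where "r = (j*b2) mod n2"
  have qr: "j*b2 = n2*q + r" unfolding q_def r_def by simp
  have r0: "0 \<le> r" "r \<le> n2 - 1" unfolding r_def using n2p by auto
  have k1: "n1*(b1+b2) = (n1+n2)*b1 + 1" unfolding n1_def n2_def using assms(5) by (simp add: algebra_simps)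
  have k2: "n2*(b1+b2) = (n1+n2)*b2 - 1" unfolding n1_def n2_def using assms(5) by (simp add: algebra_simps)
  have key: "n2*((n1+j)*(b1+b2)) = (n1+n2)*(n2*b1) + (n1+n2)*(j*b2) + n2 - j"
  proof -
    have "n2*((n1+j)*(b1+b2)) = n2*(n1*(b1+b2)) + j*(n2*(b1+b2))" by (simp add: algebra_simps)
    also have "\<dots> = n2*((n1+n2)*b1 + 1) + j*((n1+n2)*b2 - 1)" using k1 k2 by simp
    finally show ?thesis by (simp add: algebra_simps)
  qed
  have e0: "n2*((n1+j)*(b1+b2)) = (n1+n2)*(n2*b1) + (n1+n2)*(n2*q + r) + n2 - j"
    using key qr by simp
  have e: "n2*((n1+j)*(b1+b2)) = n2*((n1+n2)*(b1+q)) + (n1+n2)*r + (n2 - j)"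
    using e0 by (simp add: algebra_simps)
  have lo: "n2*((n1+n2)*(b1+q)) \<le> n2*((n1+j)*(b1+b2))"
  proof -
    have "(n1+n2)*r \<ge> 0" using r0 n1p n2p by simp
    then show ?thesis using e assms(8) n2_def by linarith
  qed
  have hi: "n2*((n1+j)*(b1+b2)) < n2*((n1+n2)*(b1+q) + (n1+n2))"
  proof -
    have "(n1+n2)*r \<le> (n1+n2)*(n2-1)" using r0 n1p n2p by (intro mult_left_mono) auto
    moreover have "n2 - j < n1 + n2" using assms(7) n1p by simp
    ultimately show ?thesis using e by (simp add: algebra_simps)
  qed
  have A: "(n1+n2)*(b1+q) \<le> (n1+j)*(b1+b2)" using lo n2p by (simp add: mult_le_cancel_left_pos)
  have B: "(n1+j)*(b1+b2) < (n1+n2)*(b1+q) + (n1+n2)" using hi n2p by (simp add: mult_less_cancel_left_pos)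
  have "((n1+j)*(b1+b2)) div (n1+n2) = b1 + q"
    by (rule int_div_pos_eq[of _ _ _ "(n1+j)*(b1+b2) - (n1+n2)*(b1+q)"]) (use A B in auto)
  then show ?thesis unfolding q_def n1_def n2_def by simp
qed

definition cl :: "int \<Rightarrow> int \<Rightarrow> nat \<Rightarrow> letter" where
  "cl a b i = (if ((int i - 1) * b) div (a+b) < (int i * b) div (a+b) then LY else LX)"

definition cw :: "int \<times> int \<Rightarrow> letter list" where
  "cw c = map (cl (fst c) (snd c)) [1..<nat (fst c + snd c) + 1]"

definition vadd :: "int \<times> int \<Rightarrow> int \<times> int \<Rightarrow> int \<times> int" where
  "vadd u v = (fst u + fst v, snd u + snd v)"

definition dt :: "int \<times> int \<Rightarrow> int \<times> int \<Rightarrow> int" where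
  "dt u v = fst u * snd v - fst v * snd u"

definition nn :: "int \<times> int \<Rightarrow> bool" where
  "nn u \<longleftrightarrow> fst u \<ge> 0 \<and> snd u \<ge> 0"

lemma nn_det_pos:
  assumes "nn u" "nn v" "dt u v = 1"
  shows "fst u + snd u \<ge> 1" "fst v + snd v \<ge> 1"
proof -
  obtain a1 b1 where u: "u = (a1,b1)" by force
  obtain a2 b2 where v: "v = (a2,b2)" by force
  show "fst u + snd u \<ge> 1"
  proof (rule ccontr)
    assume "\<not> ?thesis" then have "a1 = 0" "b1 = 0" using assms u unfolding nn_def by auto
    then show False using assms u v unfolding dt_def by simp
  qed
  show "fst v + snd v \<ge> 1"
  proof (rule ccontr)
    assume "\<not> ?thesis" then have "a2 = 0" "b2 = 0" using assms v unfolding nn_def by auto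
    then show False using assms u v unfolding dt_def by simp
  qed
qed

lemma cw_fac:
  assumes "nn u" "nn v" "dt u v = 1"
  shows "cw (vadd u v) = cw u @ cw v"
proof -
  obtain a1 b1 where u: "u = (a1,b1)" by force
  obtain a2 b2 where v: "v = (a2,b2)" by force
  have p1: "a1 + b1 \<ge> 1" and p2: "a2+b2 \<ge> 1" using nn_det_pos[OF assms] u v by auto
  have h: "a1 \<ge> 0" "b1 \<ge> 0" "a2 \<ge> 0" "b2 \<ge> 0" "a1*b2 - a2*b1 = 1"
    using assms u v unfolding nn_def dt_def by auto
  define N1 where "N1 = nat (a1+b1)"
  define N2 where "N2 = nat (a2+b2)"
  have N: "nat ((a1+a2) + (b1+b2)) = N1 + N2" using p1 p2 N1_def N2_def by simp
  have e1: "cl (a1+a2) (b1+b2) k = cl a1 b1 k" if "1 \<le> k" "k \<le> N1" for k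
  proof -
    have x1: "(int k*(b1+b2)) div ((a1+b1)+(a2+b2)) = (int k*b1) div (a1+b1)"
      by (rule divA) (use h p2 that N1_def in auto)
    have x2: "((int k - 1)*(b1+b2)) div ((a1+b1)+(a2+b2)) = ((int k - 1)*b1) div (a1+b1)"
      by (rule divA) (use h p2 that N1_def in auto)
    have ee: "(a1+a2) + (b1+b2) = (a1+b1)+(a2+b2)" by simp
    show ?thesis unfolding cl_def ee x1 x2 by simp
  qed
  have e2: "cl (a1+a2) (b1+b2) (N1 + j) = cl a2 b2 j" if "1 \<le> j" "j \<le> N2" for j
  proof -
    have i1: "int (N1 + j) = (a1+b1) + int j" using N1_def p1 by simp
    have i2: "int (N1 + j) - 1 = (a1+b1) + (int j - 1)" using N1_def p1 by simp
    have ee: "(a1+a2) + (b1+b2) = (a1+b1)+(a2+b2)" by simp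
    have x1: "(int (N1+j)*(b1+b2)) div ((a1+a2)+(b1+b2)) = b1 + (int j*b2) div (a2+b2)"
      unfolding i1 ee by (rule divB) (use h p1 that N2_def in auto)
    have x2: "((int (N1+j) - 1)*(b1+b2)) div ((a1+a2)+(b1+b2)) = b1 + ((int j - 1)*b2) div (a2+b2)"
      unfolding i2 ee by (rule divB) (use h p1 that N2_def in auto)
    show ?thesis unfolding cl_def x1 x2 by simp
  qed
  show ?thesis
  proof (rule nth_equalityI)
    show "length (cw (vadd u v)) = length (cw u @ cw v)"
      unfolding cw_def vadd_def u v using N N1_def N2_def p1 p2 by (simp del: upt_Suc)
    fix i assume "i < length (cw (vadd u v))"
    then have i: "i < N1 + N2" unfolding cw_def vadd_def u v using N by (simp del: upt_Suc)
    have L: "cw (vadd u v) ! i = cl (a1+a2) (b1+b2) (Suc i)"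
      unfolding cw_def vadd_def u v using N i by (simp del: upt_Suc)
    show "cw (vadd u v) ! i = (cw u @ cw v) ! i"
    proof (cases "i < N1")
      case True
      have "(cw u @ cw v) ! i = cl a1 b1 (Suc i)"
        unfolding cw_def u using True N1_def by (simp add: nth_append del: upt_Suc)
      then show ?thesis using L e1[of "Suc i"] True by simp
    next
      case False
      have "(cw u @ cw v) ! i = cl a2 b2 (Suc (i - N1))"
        unfolding cw_def u v using False i N1_def N2_def by (simp add: nth_append del: upt_Suc)
      moreover have "Suc i = N1 + Suc (i - N1)" using False by simp
      ultimately show ?thesis using L e2[of "Suc (i - N1)"] False i by simp
    qed
  qed
qed

lemma eval_append: "eval_word A B (w1 @ w2) = eval_word A B w1 ** eval_word A B w2"
  by (induction w1) (simp_all add: eval_word_def matrix_mul_assoc matrix_mul_lid)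

lemma eval_det: assumes "det A = 1" "det B = 1" shows "det (eval_word A B w) = 1"
proof (induction w)
  case Nil then show ?case by (simp add: eval_word_def det_I)
next
  case (Cons l w)
  have "det (eval_letter A B l) = 1" using assms det_inv by (cases l) auto
  then show ?case using Cons by (simp add: eval_word_def det_mul)
qed

definition Mw :: "complex^2^2 \<Rightarrow> complex^2^2 \<Rightarrow> int \<times> int \<Rightarrow> complex^2^2" where
  "Mw A B c = eval_word A B (cw c)"

definition ff :: "complex^2^2 \<Rightarrow> complex^2^2 \<Rightarrow> int \<times> int \<Rightarrow> complex" where
  "ff A B c = trace (Mw A B c)"

definition vdiff :: "int \<times> int \<Rightarrow> int \<times> int \<Rightarrow> int \<times> int" where
  "vdiff u v = (\<bar>fst u - fst v\<bar>, \<bar>snd u - snd v\<bar>)"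

definition Fr :: "complex \<Rightarrow> complex \<Rightarrow> complex \<Rightarrow> complex" where
  "Fr x y z = x^2 + y^2 + z^2 - x*y*z"

lemma Mfac: "nn u \<Longrightarrow> nn v \<Longrightarrow> dt u v = 1 \<Longrightarrow> Mw A B (vadd u v) = Mw A B u ** Mw A B v"
  unfolding Mw_def by (simp add: cw_fac eval_append)

lemma dt_simps: "dt u (vadd u w) = dt u w" "dt (vadd w v) v = dt w v"
  by (simp_all add: dt_def vadd_def algebra_simps)

lemma nn_vadd: "nn u \<Longrightarrow> nn v \<Longrightarrow> nn (vadd u v)" by (simp add: nn_def vadd_def)

lemma E0: assumes "det A = 1" "det B = 1" "nn u" "nn w" "dt u w = 1"
  shows "ff A B (vadd u (vadd u w)) + ff A B w = ff A B u * ff A B (vadd u w)"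
proof -
  have "Mw A B (vadd u (vadd u w)) = Mw A B u ** (Mw A B u ** Mw A B w)"
    using Mfac[of u "vadd u w"] Mfac[of u w] assms nn_vadd dt_simps by simp
  moreover have "det (Mw A B u) = 1" unfolding Mw_def using eval_det assms by blast
  ultimately show ?thesis unfolding ff_def using tr_id1 Mfac[of u w] assms
    by (simp add: matrix_mul_assoc)
qed

lemma E0': assumes "det A = 1" "det B = 1" "nn w" "nn v" "dt w v = 1"
  shows "ff A B (vadd (vadd w v) v) + ff A B w = ff A B (vadd w v) * ff A B v"
proof -
  have "Mw A B (vadd (vadd w v) v) = (Mw A B w ** Mw A B v) ** Mw A B v"
    using Mfac[of "vadd w v" v] Mfac[of w v] assms nn_vadd dt_simps by simp
  moreover have "det (Mw A B v) = 1" unfolding Mw_def using eval_det assms by blast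
  ultimately show ?thesis unfolding ff_def using tr_id2 Mfac[of w v] assms
    by (simp add: matrix_mul_assoc)
qed

lemma dominate:
  assumes "nn u" "nn v" "dt u v = 1"
  shows "(fst u \<le> fst v \<and> snd u \<le> snd v) \<or> (fst v \<le> fst u \<and> snd v \<le> snd u)
     \<or> (u = (1,0) \<and> v = (0,1))"
proof -
  obtain a1 b1 where u: "u = (a1,b1)" by force
  obtain a2 b2 where v: "v = (a2,b2)" by force
  have h: "a1 \<ge> 0" "b1 \<ge> 0" "a2 \<ge> 0" "b2 \<ge> 0" "a1*b2 - a2*b1 = 1"
    using assms u v unfolding nn_def dt_def by auto
  show ?thesis
  proof (cases "a1 \<le> a2 \<and> b1 \<le> b2 \<or> a2 \<le> a1 \<and> b2 \<le> b1")
    case True then show ?thesis using u v by auto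
  next
    case False
    then consider "a1 > a2" "b2 > b1" | "a2 > a1" "b1 > b2" by linarith
    then show ?thesis
    proof cases
      case 1
      have "a1*b2 \<ge> (a2+1)*(b1+1)" using 1 h by (intro mult_mono) auto
      then have "a2 + b1 + 1 \<le> 1" using h by (simp add: algebra_simps)
      then have "a2 = 0" "b1 = 0" using h by auto
      then have "a1 * b2 = 1" using h by simp
      moreover have "a1 \<noteq> 0" using \<open>a1 * b2 = 1\<close> by auto
      ultimately have "a1 = 1 \<and> b2 = 1" using h pos_zmult_eq_1_iff by auto
      then have "a1 = 1" "b2 = 1" by auto
      then show ?thesis using u v \<open>a2 = 0\<close> \<open>b1 = 0\<close> by simp
    next
      case 2
      have "a1*b2 \<le> a2*b2" using 2 h by (intro mult_right_mono) auto
      also have "\<dots> \<le> a2*b1" using 2 h by (intro mult_left_mono) auto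
      finally show ?thesis using h by simp
    qed
  qed
qed

lemma E_rel:
  assumes "det A = 1" "det B = 1" "nn u" "nn v" "dt u v = 1" "fst u \<ge> 1" "fst v \<ge> 1"
  shows "ff A B (vadd u v) + ff A B (vdiff u v) = ff A B u * ff A B v"
proof -
  consider "fst u \<le> fst v \<and> snd u \<le> snd v" | "fst v \<le> fst u \<and> snd v \<le> snd u"
    using dominate[OF assms(3-5)] assms(7) by auto
  then show ?thesis
  proof cases
    case 1
    define w where "w = (fst v - fst u, snd v - snd u)"
    have vw: "v = vadd u w" unfolding w_def vadd_def by simp
    have "nn w" using 1 unfolding w_def nn_def by simp
    moreover have "dt u w = 1" using assms(5) vw dt_simps by metis
    moreover have "vdiff u v = w" unfolding vdiff_def w_def using 1 by simp
    ultimately show ?thesis using E0[OF assms(1,2,3), of w] vw by simp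
  next
    case 2
    define w where "w = (fst u - fst v, snd u - snd v)"
    have uw: "u = vadd w v" unfolding w_def vadd_def by simp
    have "nn w" using 2 unfolding w_def nn_def by simp
    moreover have "dt w v = 1" using assms(5) uw dt_simps by metis
    moreover have "vdiff u v = w" unfolding vdiff_def w_def using 2 by simp
    ultimately show ?thesis using E0'[OF assms(1,2) _ assms(4), of w] uw by simp
  qed
qed

lemma cw10: "cw (1,0) = [LX]" by (simp add: cw_def cl_def)
lemma cw01: "cw (0,1) = [LY]" by (simp add: cw_def cl_def)

lemma Fr_move: "Fr x y (x*y - w) = Fr x w y" "Fr x y (x*y - w) = Fr w y x"
  by (simp_all add: Fr_def algebra_simps power2_eq_square)

lemma V_rel:
  assumes "det A = 1" "det B = 1"
  shows "nn u \<Longrightarrow> nn v \<Longrightarrow> dt u v = 1 \<Longrightarrow>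
    Fr (ff A B u) (ff A B v) (ff A B (vadd u v)) = trace (A ** (B ** (sl2_inv A ** (sl2_inv B ** mat 1)))) + 2"
proof (induction "nat (fst u + snd u + fst v + snd v)" arbitrary: u v rule: less_induct)
  case less
  have p: "fst u + snd u \<ge> 1" "fst v + snd v \<ge> 1" using nn_det_pos less.prems by auto
  consider "fst u \<le> fst v \<and> snd u \<le> snd v" | "fst v \<le> fst u \<and> snd v \<le> snd u"
     | "u = (1,0) \<and> v = (0,1)"
    using dominate[OF less.prems] by auto
  then show ?case
  proof cases
    case 1
    define w where "w = (fst v - fst u, snd v - snd u)"
    have vw: "v = vadd u w" unfolding w_def vadd_def by simp
    have nw: "nn w" using 1 unfolding w_def nn_def by simp
    have dw: "dt u w = 1" using less.prems(3) vw dt_simps by metis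
    have "nat (fst u + snd u + fst w + snd w) < nat (fst u + snd u + fst v + snd v)"
      using p unfolding w_def by simp
    then have IH: "Fr (ff A B u) (ff A B w) (ff A B v) = trace (A ** (B ** (sl2_inv A ** (sl2_inv B ** mat 1)))) + 2"
      using less.hyps[of u w] less.prems nw dw vw by simp
    have "ff A B (vadd u v) = ff A B u * ff A B v - ff A B w"
      using E0[OF assms less.prems(1) nw dw] vw by (simp add: algebra_simps)
    then show ?thesis using IH Fr_move(1) by metis
  next
    case 2
    define w where "w = (fst u - fst v, snd u - snd v)"
    have uw: "u = vadd w v" unfolding w_def vadd_def by simp
    have nw: "nn w" using 2 unfolding w_def nn_def by simp
    have dw: "dt w v = 1" using less.prems(3) uw dt_simps by metis
    have "nat (fst w + snd w + fst v + snd v) < nat (fst u + snd u + fst v + snd v)"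
      using p unfolding w_def by simp
    then have IH: "Fr (ff A B w) (ff A B v) (ff A B u) = trace (A ** (B ** (sl2_inv A ** (sl2_inv B ** mat 1)))) + 2"
      using less.hyps[of w v] less.prems nw dw uw by simp
    have "ff A B (vadd u v) = ff A B u * ff A B v - ff A B w"
      using E0'[OF assms nw less.prems(2) dw] uw by (simp add: algebra_simps)
    then show ?thesis using IH Fr_move(2) by metis
  next
    case 3
    have "vadd u v = (1,0) + (0,1)" unfolding vadd_def using 3 by simp
    have "Mw A B (vadd u v) = A ** B" using Mfac[OF less.prems] 3
      by (simp add: Mw_def cw10 cw01 eval_word_def matrix_mul_rid)
    moreover have "Mw A B u = A" "Mw A B v = B" using 3
      by (simp_all add: Mw_def cw10 cw01 eval_word_def matrix_mul_rid)
    ultimately show ?thesis unfolding ff_def Fr_def using fricke[OF assms] by simp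
  qed
qed

lemma parallelogram: "cmod (a - b)^2 = 2*cmod a^2 + 2*cmod b^2 - cmod (a + b)^2"
  unfolding cmod_power2 by (simp add: power2_eq_square algebra_simps)

lemma Fr_expand: assumes "m + d = x*y"
  shows "Fr x y m - 4 = (m-d)^2/4 - (x^2-4)*(y^2-4)/4"
proof -
  have "4*(Fr x y m - 4) = (m-d)^2 - (x^2-4)*(y^2-4)" using assms unfolding Fr_def by algebra
  then show ?thesis by (simp add: field_simps)
qed

lemma stepL_eq: fixes x y m d m' :: complex assumes "m + d = x*y" "m' + y = x*m"
  shows "(x^2-4)*(y^2-4)*y = -(x*(m-d) - 2*(m'-y))*(y^2-4)"
  using assms by algebra

lemma stepR_eq: fixes x y m d m' :: complex assumes "m + d = x*y" "m' + x = m*y"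
  shows "(x^2-4)*(y^2-4)*x = -(y*(m-d) - 2*(m'-x))*(x^2-4)"
  using assms by algebra

lemma bound_aux:
  fixes x y e1 e2 :: complex and C :: real
  assumes "(x^2-4)*(y^2-4)*y = -(x*e1 - 2*e2)*(y^2-4)" "cmod y > 2" "cmod x \<le> C" "cmod y \<le> C"
  shows "cmod ((x^2-4)*(y^2-4)) \<le> (C*cmod e1 + 2*cmod e2)*(C^2+4)/2"
proof -
  have "cmod ((x^2-4)*(y^2-4)) * cmod y = cmod (x*e1 - 2*e2) * cmod (y^2-4)"
  proof -
    have "cmod ((x^2-4)*(y^2-4)*y) = cmod (-(x*e1 - 2*e2)*(y^2-4))" using assms(1) by (rule arg_cong)
    then show ?thesis by (simp only: norm_mult norm_minus_cancel)
  qed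
  moreover have "cmod (x*e1 - 2*e2) \<le> C*cmod e1 + 2*cmod e2"
  proof -
    have "cmod (x*e1 - 2*e2) \<le> cmod (x*e1) + cmod (2*e2)" by (rule norm_triangle_ineq4)
    also have "\<dots> \<le> C*cmod e1 + 2*cmod e2" using assms(3) by (simp add: norm_mult mult_right_mono)
    finally show ?thesis .
  qed
  moreover have "cmod (y^2-4) \<le> C^2 + 4"
  proof -
    have "cmod (y^2-4) \<le> cmod (y^2) + cmod (4::complex)" by (rule norm_triangle_ineq4)
    also have "\<dots> \<le> C^2 + 4" using assms(4) by (simp add: norm_power power_mono)
    finally show ?thesis .
  qed
  ultimately have "cmod ((x^2-4)*(y^2-4)) * cmod y \<le> (C*cmod e1 + 2*cmod e2)*(C^2+4)"
    by (metis mult_mono norm_ge_zero order_trans)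
  also have "\<dots> \<le> (C*cmod e1 + 2*cmod e2)*(C^2+4)/2 * cmod y"
  proof -
    have "0 \<le> (C*cmod e1 + 2*cmod e2)*(C^2+4)" using assms by (intro mult_nonneg_nonneg) auto
    then have "(C*cmod e1 + 2*cmod e2)*(C^2+4)/2 * 2 \<le> (C*cmod e1 + 2*cmod e2)*(C^2+4)/2 * cmod y"
      using assms(2) by (intro mult_left_mono) auto
    then show ?thesis by simp
  qed
  finally have "cmod ((x^2-4)*(y^2-4)) * cmod y \<le> (C*cmod e1 + 2*cmod e2)*(C^2+4)/2 * cmod y" .
  then show ?thesis by (rule mult_right_le_imp_le) (use assms(2) in auto)
qed

lemma caseB:
  fixes x y m d :: "nat \<Rightarrow> complex"
  assumes rel: "\<And>k. m k + d k = x k * y k"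
    and fr: "\<And>k. Fr (x k) (y k) (m k) = \<mu>"
    and tr: "\<And>k. (x (Suc k) = x k \<and> y (Suc k) = m k \<and> d (Suc k) = y k) \<or>
                  (x (Suc k) = m k \<and> y (Suc k) = y k \<and> d (Suc k) = x k)"
    and bx: "\<And>k. cmod (x k) > 2" and bY: "\<And>k. cmod (y k) > 2"
    and desc: "\<And>k. cmod (m k) < cmod (d k)"
  shows "\<mu> = 4"
proof -
  define \<Phi> where "\<Phi> k = cmod (x k) * cmod (y k)" for k
  define K where "K k = (if x (Suc k) = x k \<and> y (Suc k) = m k \<and> d (Suc k) = y k
      then cmod (x k) else cmod (y k))" for k
  have K2: "K k > 2" for k using bx bY unfolding K_def by auto
  have PhiK: "\<Phi> k = K k * cmod (d (Suc k))" "\<Phi> (Suc k) = K k * cmod (m k)" for k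
    using tr[of k] unfolding \<Phi>_def K_def by auto
  have Phi_lt: "\<Phi> (Suc k) < 2 * cmod (d (Suc k))" for k
  proof -
    have "\<Phi> (Suc k) = cmod (m (Suc k) + d (Suc k))" unfolding \<Phi>_def using rel[of "Suc k"] by (simp add: norm_mult)
    also have "\<dots> \<le> cmod (m (Suc k)) + cmod (d (Suc k))" by (rule norm_triangle_ineq)
    also have "\<dots> < 2 * cmod (d (Suc k))" using desc[of "Suc k"] by simp
    finally show ?thesis .
  qed
  have Phi4: "\<Phi> k > 4" for k
  proof -
    have "2 * 2 < cmod (x k) * cmod (y k)" using bx[of k] bY[of k] by (intro mult_strict_mono) auto
    then show ?thesis unfolding \<Phi>_def by simp
  qed
  have Kbound: "K k < 2 * \<Phi> k / \<Phi> (Suc k)" for k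
  proof -
    have "K k * \<Phi> (Suc k) < K k * (2 * cmod (d (Suc k)))" using Phi_lt K2[of k] by simp
    also have "\<dots> = 2 * \<Phi> k" using PhiK by simp
    finally show ?thesis using Phi4[of "Suc k"] by (simp add: field_simps)
  qed
  have dec: "\<Phi> (Suc k) \<le> \<Phi> k" for k
  proof -
    have "\<Phi> (Suc k) < 2 * cmod (d (Suc k))" by (rule Phi_lt)
    also have "\<dots> \<le> K k * cmod (d (Suc k))" using K2[of k] by (intro mult_right_mono) auto
    finally show ?thesis using PhiK by simp
  qed
  have decseq: "decseq \<Phi>" using dec by (simp add: decseq_Suc_iff)
  obtain L where PhiL: "\<Phi> \<longlonglongrightarrow> L"
  proof -
    have "Bseq \<Phi>" using decseq_bounded[OF decseq, of 4] Phi4 less_imp_le by blast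
    then have "convergent \<Phi>" using decseq Bseq_monoseq_convergent monoseq_iff by blast
    then show ?thesis using that by (auto simp: convergent_def)
  qed
  have L4: "L \<ge> 4" using PhiL Phi4 by (meson LIMSEQ_le_const less_imp_le)
  have PhiL': "(\<lambda>k. \<Phi> (Suc k)) \<longlonglongrightarrow> L" using PhiL by (rule LIMSEQ_Suc)
  have KL: "K \<longlonglongrightarrow> 2"
  proof (rule tendsto_sandwich[of "\<lambda>_. 2" _ _ "\<lambda>k. 2 * \<Phi> k / \<Phi> (Suc k)"])
    show "\<forall>\<^sub>F n in sequentially. 2 \<le> K n" using K2 by (simp add: less_imp_le)
    show "\<forall>\<^sub>F n in sequentially. K n \<le> 2 * \<Phi> n / \<Phi> (Suc n)" using Kbound by (simp add: less_imp_le)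
    show "(\<lambda>_. 2) \<longlonglongrightarrow> (2::real)" by simp
    have "(\<lambda>k. 2 * \<Phi> k / \<Phi> (Suc k)) \<longlonglongrightarrow> 2 * L / L"
      using L4 by (intro tendsto_intros PhiL PhiL') auto
    then show "(\<lambda>k. 2 * \<Phi> k / \<Phi> (Suc k)) \<longlonglongrightarrow> 2" using L4 by simp
  qed
  have dL: "(\<lambda>k. cmod (d (Suc k))) \<longlonglongrightarrow> L/2"
  proof -
    have "(\<lambda>k. \<Phi> k / K k) \<longlonglongrightarrow> L/2" by (intro tendsto_intros PhiL KL) auto
    moreover have "\<Phi> k / K k = cmod (d (Suc k))" for k using PhiK K2[of k] by simp
    ultimately show ?thesis by simp
  qed
  then have dL0: "(\<lambda>k. cmod (d k)) \<longlonglongrightarrow> L/2" by (rule LIMSEQ_imp_Suc)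
  have mL: "(\<lambda>k. cmod (m k)) \<longlonglongrightarrow> L/2"
  proof -
    have "(\<lambda>k. \<Phi> (Suc k) / K k) \<longlonglongrightarrow> L/2" by (intro tendsto_intros PhiL' KL) auto
    moreover have "\<Phi> (Suc k) / K k = cmod (m k)" for k using PhiK K2[of k] by simp
    ultimately show ?thesis by simp
  qed
  have sL: "(\<lambda>k. cmod (m k + d k)) \<longlonglongrightarrow> L"
  proof -
    have "cmod (m k + d k) = \<Phi> k" for k unfolding \<Phi>_def using rel[of k] by (simp add: norm_mult)
    then show ?thesis using PhiL by simp
  qed
  define E where "E k = m k - d k" for k
  have E0: "(\<lambda>k. cmod (E k)) \<longlonglongrightarrow> 0"
  proof -
    have "(\<lambda>k. 2*cmod (m k)^2 + 2*cmod (d k)^2 - cmod (m k + d k)^2) \<longlonglongrightarrow>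
          2*(L/2)^2 + 2*(L/2)^2 - L^2"
      by (intro tendsto_intros mL dL0 sL)
    then have "(\<lambda>k. cmod (E k)^2) \<longlonglongrightarrow> 0"
      unfolding E_def parallelogram by (simp add: power2_eq_square)
    then have "(\<lambda>k. sqrt (cmod (E k)^2)) \<longlonglongrightarrow> sqrt 0" by (intro tendsto_intros)
    then show ?thesis by simp
  qed
  define C where "C = \<Phi> 0 / 2"
  have Cx: "cmod (x k) \<le> C" "cmod (y k) \<le> C" for k
  proof -
    have "\<Phi> k \<le> \<Phi> 0" using decseq by (simp add: decseq_def)
    then have "cmod (x k) * cmod (y k) \<le> \<Phi> 0" unfolding \<Phi>_def .
    moreover have "2 * cmod (x k) \<le> cmod (y k) * cmod (x k)" using bY[of k] by (intro mult_right_mono) auto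
    moreover have "2 * cmod (y k) \<le> cmod (x k) * cmod (y k)" using bx[of k] by (intro mult_right_mono) auto
    ultimately show "cmod (x k) \<le> C" "cmod (y k) \<le> C" unfolding C_def by (simp_all add: algebra_simps)
  qed
  have key: "cmod (\<mu> - 4) \<le> cmod (E k)^2/4 + (C*cmod (E k) + 2*cmod (E (Suc k)))*(C^2+4)/8" for k
  proof -
    have e1: "\<mu> - 4 = (E k)^2/4 - (x k^2-4)*(y k^2-4)/4"
      using Fr_expand[OF rel[of k]] fr[of k] unfolding E_def by simp
    have b: "cmod ((x k^2-4)*(y k^2-4)) \<le> (C*cmod (E k) + 2*cmod (E (Suc k)))*(C^2+4)/2"
    proof (cases "x (Suc k) = x k \<and> y (Suc k) = m k \<and> d (Suc k) = y k")
      case True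
      have "m (Suc k) + y k = x k * m k" using rel[of "Suc k"] True by simp
      then have "(x k^2-4)*(y k^2-4)*y k = -(x k*E k - 2*E (Suc k))*(y k^2-4)"
        using stepL_eq[OF rel[of k]] True unfolding E_def by simp
      then show ?thesis using bound_aux bY Cx by blast
    next
      case False
      then have T: "x (Suc k) = m k \<and> y (Suc k) = y k \<and> d (Suc k) = x k" using tr[of k] by auto
      have "m (Suc k) + x k = m k * y k" using rel[of "Suc k"] T by simp
      then have R: "(x k^2-4)*(y k^2-4)*x k = -(y k*(m k - d k) - 2*(m (Suc k) - x k))*(x k^2-4)"
        by (rule stepR_eq[OF rel[of k]])
      have "(y k^2-4)*(x k^2-4)*x k = -(y k*E k - 2*E (Suc k))*(x k^2-4)"
        using R T unfolding E_def by (simp add: mult.commute)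
      then have "cmod ((y k^2-4)*(x k^2-4)) \<le> (C*cmod (E k) + 2*cmod (E (Suc k)))*(C^2+4)/2"
        using bound_aux bx Cx by blast
      then show ?thesis by (simp add: algebra_simps)
    qed
    have "cmod (\<mu> - 4) \<le> cmod ((E k)^2/4) + cmod ((x k^2-4)*(y k^2-4)/4)"
      unfolding e1 by (rule norm_triangle_ineq4)
    also have "\<dots> = cmod (E k)^2/4 + cmod ((x k^2-4)*(y k^2-4))/4" by (simp add: norm_power)
    also have "\<dots> \<le> cmod (E k)^2/4 + (C*cmod (E k) + 2*cmod (E (Suc k)))*(C^2+4)/8"
      using b by simp
    finally show ?thesis .
  qed
  have "(\<lambda>k. cmod (E k)^2/4 + (C*cmod (E k) + 2*cmod (E (Suc k)))*(C^2+4)/8) \<longlonglongrightarrow>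
        0^2/4 + (C*0 + 2*0)*(C^2+4)/8"
    by (intro tendsto_intros E0 LIMSEQ_Suc[OF E0]) auto
  then have lim: "(\<lambda>k. cmod (E k)^2/4 + (C*cmod (E k) + 2*cmod (E (Suc k)))*(C^2+4)/8) \<longlonglongrightarrow> (0::real)"
    by simp
  have "cmod (\<mu> - 4) \<le> 0"
    using key by (intro LIMSEQ_le_const[OF lim]) auto
  then show ?thesis by simp
qed

definition sz :: "int \<times> int \<Rightarrow> int" where "sz c = fst c + snd c"

definition Pg :: "(int \<times> int \<Rightarrow> complex) \<Rightarrow> real \<Rightarrow> int \<Rightarrow> int \<times> int \<Rightarrow> bool" where
  "Pg f c0 S c \<longleftrightarrow> (\<forall>j::nat. sz c > 2^j * S \<longrightarrow> cmod (f c) \<ge> c0 * (c0/2)^j)"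

definition Inv :: "(int \<times> int \<Rightarrow> complex) \<Rightarrow> real \<Rightarrow> int \<Rightarrow> int \<times> int \<Rightarrow> int \<times> int \<Rightarrow> bool" where
  "Inv f c0 S c1 c2 \<longleftrightarrow> nn c1 \<and> nn c2 \<and> dt c1 c2 = 1 \<and> fst c1 \<ge> 1 \<and> fst c2 \<ge> 1 \<and>
     cmod (f c1) \<ge> c0 \<and> cmod (f c2) \<ge> c0 \<and> Pg f c0 S c1 \<and> Pg f c0 S c2 \<and>
     cmod (f (vadd c1 c2)) \<ge> cmod (f (vdiff c1 c2))"

definition Erel :: "(int \<times> int \<Rightarrow> complex) \<Rightarrow> bool" where
  "Erel f \<longleftrightarrow> (\<forall>u v. nn u \<longrightarrow> nn v \<longrightarrow> dt u v = 1 \<longrightarrow> fst u \<ge> 1 \<longrightarrow> fst v \<ge> 1 \<longrightarrow>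
      f (vadd u v) + f (vdiff u v) = f u * f v)"

lemma child:
  assumes E: "Erel f" and I: "Inv f c0 S c1 c2" and c0: "c0 \<ge> 2"
  shows "cmod (f (vadd c1 c2)) \<ge> (c0/2) * cmod (f c1)" "cmod (f (vadd c1 c2)) \<ge> (c0/2) * cmod (f c2)"
    "cmod (f (vadd c1 c2)) \<ge> c0" "Pg f c0 S (vadd c1 c2)"
proof -
  let ?m = "f (vadd c1 c2)" and ?x = "f c1" and ?y = "f c2" and ?w = "f (vdiff c1 c2)"
  have eq: "?m + ?w = ?x * ?y" using E I unfolding Erel_def Inv_def by blast
  have "cmod ?x * cmod ?y = cmod (?m + ?w)" using eq by (simp add: norm_mult)
  also have "\<dots> \<le> cmod ?m + cmod ?w" by (rule norm_triangle_ineq)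
  also have "\<dots> \<le> 2 * cmod ?m" using I unfolding Inv_def by simp
  finally have xy: "cmod ?x * cmod ?y \<le> 2 * cmod ?m" .
  have hx: "c0 \<le> cmod ?x" and hy: "c0 \<le> cmod ?y" using I unfolding Inv_def by auto
  have "c0 * cmod ?x \<le> cmod ?y * cmod ?x" using hy by (intro mult_right_mono) auto
  then show g1: "cmod ?m \<ge> (c0/2) * cmod ?x" using xy by (simp add: algebra_simps)
  have "c0 * cmod ?y \<le> cmod ?x * cmod ?y" using hx by (intro mult_right_mono) auto
  then show g2: "cmod ?m \<ge> (c0/2) * cmod ?y" using xy by (simp add: algebra_simps)
  have "c0 \<le> (c0/2) * cmod ?x"
  proof -
    have "1 * c0 \<le> (c0/2) * cmod ?x" using c0 hx by (intro mult_mono) auto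
    then show ?thesis by simp
  qed
  then show g3: "cmod ?m \<ge> c0" using g1 by simp
  show "Pg f c0 S (vadd c1 c2)" unfolding Pg_def
  proof (intro allI impI)
    fix j :: nat assume j: "2^j * S < sz (vadd c1 c2)"
    show "c0 * (c0/2)^j \<le> cmod ?m"
    proof (cases j)
      case 0 then show ?thesis using g3 by simp
    next
      case (Suc i)
      have "sz (vadd c1 c2) = sz c1 + sz c2" by (simp add: sz_def vadd_def)
      moreover have "(2::int)^j * S = 2 * (2^i * S)" using Suc by simp
      ultimately have "2^i * S < sz c1 \<or> 2^i * S < sz c2" using j by linarith
      then have "c0 * (c0/2)^i \<le> cmod ?x \<or> c0 * (c0/2)^i \<le> cmod ?y"
        using I unfolding Inv_def Pg_def by blast
      then have "(c0/2) * (c0 * (c0/2)^i) \<le> cmod ?m"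
        using g1 g2 c0 by (meson mult_left_mono order_trans divide_nonneg_nonneg le_numeral_extra(1) order.trans zero_le_numeral less_imp_le zero_less_numeral dual_order.trans)
      then show ?thesis using Suc by (simp add: algebra_simps)
    qed
  qed
qed

lemma vdiff_L: "nn c2 \<Longrightarrow> vdiff c1 (vadd c1 c2) = c2" by (simp add: vdiff_def vadd_def nn_def)
lemma vdiff_R: "nn c1 \<Longrightarrow> vdiff (vadd c1 c2) c2 = c1" by (simp add: vdiff_def vadd_def nn_def)

lemma Inv_L:
  assumes E: "Erel f" and I: "Inv f c0 S c1 c2" and c0: "c0 \<ge> 2"
  shows "Inv f c0 S c1 (vadd c1 c2)"
proof -
  let ?m = "f (vadd c1 c2)" and ?x = "f c1" and ?y = "f c2"
  have h: "nn c1" "nn c2" "dt c1 c2 = 1" "fst c1 \<ge> 1" "fst c2 \<ge> 1" using I unfolding Inv_def by auto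
  have nm: "nn (vadd c1 c2)" using h nn_vadd by blast
  have dm: "dt c1 (vadd c1 c2) = 1" using h dt_simps by simp
  have fm: "fst (vadd c1 c2) \<ge> 1" using h by (simp add: vadd_def)
  have eq: "f (vadd c1 (vadd c1 c2)) + ?y = ?x * ?m"
    using E h nm dm fm vdiff_L[of c2 c1] unfolding Erel_def by metis
  have my: "cmod ?m \<ge> cmod ?y"
  proof -
    have "1 * cmod ?y \<le> (c0/2) * cmod ?y" using c0 by (intro mult_right_mono) auto
    then show ?thesis using child(2)[OF E I c0] by simp
  qed
  have "2 * cmod ?m \<le> cmod ?x * cmod ?m" using I c0 unfolding Inv_def by (intro mult_right_mono) auto
  also have "\<dots> = cmod (f (vadd c1 (vadd c1 c2)) + ?y)" using eq by (simp add: norm_mult)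
  also have "\<dots> \<le> cmod (f (vadd c1 (vadd c1 c2))) + cmod ?y" by (rule norm_triangle_ineq)
  finally have "cmod (f (vadd c1 (vadd c1 c2))) \<ge> cmod ?y" using my by simp
  then show ?thesis using I child[OF E I c0] h nm dm fm vdiff_L[of c2 c1] unfolding Inv_def by simp
qed

lemma Inv_R:
  assumes E: "Erel f" and I: "Inv f c0 S c1 c2" and c0: "c0 \<ge> 2"
  shows "Inv f c0 S (vadd c1 c2) c2"
proof -
  let ?m = "f (vadd c1 c2)" and ?x = "f c1" and ?y = "f c2"
  have h: "nn c1" "nn c2" "dt c1 c2 = 1" "fst c1 \<ge> 1" "fst c2 \<ge> 1" using I unfolding Inv_def by auto
  have nm: "nn (vadd c1 c2)" using h nn_vadd by blast
  have dm: "dt (vadd c1 c2) c2 = 1" using h dt_simps by simp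
  have fm: "fst (vadd c1 c2) \<ge> 1" using h by (simp add: vadd_def)
  have eq: "f (vadd (vadd c1 c2) c2) + ?x = ?m * ?y"
    using E h nm dm fm vdiff_R[of c1 c2] unfolding Erel_def by metis
  have my: "cmod ?m \<ge> cmod ?x"
  proof -
    have "1 * cmod ?x \<le> (c0/2) * cmod ?x" using c0 by (intro mult_right_mono) auto
    then show ?thesis using child(1)[OF E I c0] by simp
  qed
  have "2 * cmod ?m \<le> cmod ?y * cmod ?m" using I c0 unfolding Inv_def by (intro mult_right_mono) auto
  also have "\<dots> = cmod (f (vadd (vadd c1 c2) c2) + ?x)" using eq by (simp add: norm_mult mult.commute)
  also have "\<dots> \<le> cmod (f (vadd (vadd c1 c2) c2)) + cmod ?x" by (rule norm_triangle_ineq)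
  finally have "cmod (f (vadd (vadd c1 c2) c2)) \<ge> cmod ?x" using my by simp
  then show ?thesis using I child[OF E I c0] h nm dm fm vdiff_R[of c1 c2] unfolding Inv_def by simp
qed

lemma cramer:
  assumes "dt c1 c2 = 1"
  shows "fst c = dt c c2 * fst c1 + dt c1 c * fst c2" "snd c = dt c c2 * snd c1 + dt c1 c * snd c2"
proof -
  obtain a1 b1 a2 b2 a b where e: "c1 = (a1,b1)" "c2 = (a2,b2)" "c = (a,b)" by (metis prod.exhaust)
  have d: "a1*b2 - a2*b1 = 1" using assms e unfolding dt_def by simp
  have "a = a * (a1*b2 - a2*b1)" using d by simp
  also have "\<dots> = (a*b2 - a2*b)*a1 + (a1*b - a*b1)*a2" by (simp add: algebra_simps)
  finally show "fst c = dt c c2 * fst c1 + dt c1 c * fst c2" using e unfolding dt_def by simp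
  have "b = b * (a1*b2 - a2*b1)" using d by simp
  also have "\<dots> = (a*b2 - a2*b)*b1 + (a1*b - a*b1)*b2" by (simp add: algebra_simps)
  finally show "snd c = dt c c2 * snd c1 + dt c1 c * snd c2" using e unfolding dt_def by simp
qed

lemma position:
  assumes "dt c1 c2 = 1" "nn c1" "nn c2" "coprime (fst c) (snd c)" "dt c1 c > 0" "dt c c2 > 0"
  shows "sz c \<ge> sz c1 + sz c2"
    "c = vadd c1 c2 \<or> (dt c (vadd c1 c2) > 0) \<or> (dt (vadd c1 c2) c > 0)"
proof -
  define \<alpha> where "\<alpha> = dt c c2"
  define \<beta> where "\<beta> = dt c1 c"
  have cr1: "fst c = \<alpha> * fst c1 + \<beta> * fst c2"
    unfolding \<alpha>_def \<beta>_def by (rule cramer(1)[OF assms(1)])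
  have cr2: "snd c = \<alpha> * snd c1 + \<beta> * snd c2"
    unfolding \<alpha>_def \<beta>_def by (rule cramer(2)[OF assms(1)])
  note cr = cr1 cr2
  have "sz c = \<alpha> * sz c1 + \<beta> * sz c2" unfolding sz_def using cr by (simp add: algebra_simps)
  moreover have "\<alpha> * sz c1 \<ge> 1 * sz c1" using assms \<alpha>_def unfolding sz_def nn_def by (intro mult_right_mono) auto
  moreover have "\<beta> * sz c2 \<ge> 1 * sz c2" using assms \<beta>_def unfolding sz_def nn_def by (intro mult_right_mono) auto
  ultimately show "sz c \<ge> sz c1 + sz c2" by simp
  have d1: "dt c (vadd c1 c2) = \<alpha> - \<beta>" unfolding \<alpha>_def \<beta>_def dt_def vadd_def by (simp add: algebra_simps)
  show "c = vadd c1 c2 \<or> (dt c (vadd c1 c2) > 0) \<or> (dt (vadd c1 c2) c > 0)"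
  proof (cases "\<alpha> = \<beta>")
    case True
    have "\<alpha> dvd fst c" "\<alpha> dvd snd c" using cr True by simp_all
    then have "is_unit \<alpha>" using assms(4) coprime_common_divisor by blast
    then have "\<alpha> = 1" using assms(6) \<alpha>_def by auto
    then have "c = vadd c1 c2" using cr True by (simp add: vadd_def prod_eq_iff)
    then show ?thesis by simp
  next
    case False
    have "dt (vadd c1 c2) c = - dt c (vadd c1 c2)" unfolding dt_def by simp
    then show ?thesis using d1 False by auto
  qed
qed

lemma growth:
  assumes E: "Erel f" and c0: "c0 \<ge> 2"
  shows "Inv f c0 S c1 c2 \<Longrightarrow> coprime (fst c) (snd c) \<Longrightarrow> dt c1 c > 0 \<Longrightarrow> dt c c2 > 0 \<Longrightarrow>
    cmod (f c) \<ge> c0 \<and> Pg f c0 S c"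
proof (induction "nat (sz c - sz c1 - sz c2)" arbitrary: c1 c2 rule: less_induct)
  case less
  have h: "nn c1" "nn c2" "dt c1 c2 = 1" "fst c1 \<ge> 1" "fst c2 \<ge> 1" using less.prems unfolding Inv_def by auto
  have s1: "sz c1 \<ge> 1" "sz c2 \<ge> 1" using h unfolding sz_def nn_def by auto
  have szc: "sz c \<ge> sz c1 + sz c2" using position(1)[OF h(3,1,2) less.prems(2-4)] .
  have szm: "sz (vadd c1 c2) = sz c1 + sz c2" by (simp add: sz_def vadd_def)
  consider "c = vadd c1 c2" | "dt c (vadd c1 c2) > 0" | "dt (vadd c1 c2) c > 0"
    using position(2)[OF h(3,1,2) less.prems(2-4)] by blast
  then show ?case
  proof cases
    case 1 then show ?thesis using child[OF E less.prems(1) c0] by simp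
  next
    case 2
    have I': "Inv f c0 S c1 (vadd c1 c2)" by (rule Inv_L[OF E less.prems(1) c0])
    have "sz c \<ge> sz c1 + sz (vadd c1 c2)"
      using position(1)[of c1 "vadd c1 c2" c] I' less.prems 2 unfolding Inv_def by auto
    then have "nat (sz c - sz c1 - sz (vadd c1 c2)) < nat (sz c - sz c1 - sz c2)" using szm s1 by simp
    then show ?thesis using less.hyps[of c1 "vadd c1 c2"] I' less.prems 2 by blast
  next
    case 3
    have I': "Inv f c0 S (vadd c1 c2) c2" by (rule Inv_R[OF E less.prems(1) c0])
    have "sz c \<ge> sz (vadd c1 c2) + sz c2"
      using position(1)[of "vadd c1 c2" c2 c] I' less.prems 3 unfolding Inv_def by auto
    then have "nat (sz c - sz (vadd c1 c2) - sz c2) < nat (sz c - sz c1 - sz c2)" using szm s1 by simp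
    then show ?thesis using less.hyps[of "vadd c1 c2" c2] I' less.prems 3 by blast
  qed
qed

primrec ray :: "real \<Rightarrow> nat \<Rightarrow> (int \<times> int) \<times> (int \<times> int)" where
  "ray t 0 = ((1, \<lfloor>t\<rfloor>), (1, \<lfloor>t\<rfloor> + 1))"
| "ray t (Suc k) = (if real_of_int (snd (vadd (fst (ray t k)) (snd (ray t k))))
                         < t * real_of_int (fst (vadd (fst (ray t k)) (snd (ray t k))))
     then (vadd (fst (ray t k)) (snd (ray t k)), snd (ray t k))
     else (fst (ray t k), vadd (fst (ray t k)) (snd (ray t k))))"

definition rinv :: "real \<Rightarrow> nat \<Rightarrow> int \<times> int \<Rightarrow> int \<times> int \<Rightarrow> bool" where
  "rinv t k p q \<longleftrightarrow> nn p \<and> nn q \<and> dt p q = 1 \<and> fst p \<ge> 1 \<and> fst q \<ge> 1 \<and>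
     real_of_int (snd p) < t * real_of_int (fst p) \<and> t * real_of_int (fst q) < real_of_int (snd q) \<and>
     fst p + fst q \<ge> int k + 2"

lemma irr_neq: assumes "t \<notin> \<rat>" shows "real_of_int b \<noteq> t * real_of_int a \<or> a = 0"
proof (rule ccontr)
  assume "\<not> ?thesis"
  then have "t = real_of_int b / real_of_int a" by (auto simp: field_simps)
  then show False using assms by simp
qed

lemma ray_inv:
  assumes "t > 0" "t \<notin> \<rat>"
  shows "rinv t k (fst (ray t k)) (snd (ray t k))"
proof (induction k)
  case 0
  have "real_of_int \<lfloor>t\<rfloor> \<noteq> t" using assms(2) by (metis Rats_of_int)
  then have "real_of_int \<lfloor>t\<rfloor> < t" by (simp add: of_int_floor_le order_less_le)
  moreover have "t < real_of_int \<lfloor>t\<rfloor> + 1" by simp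
  moreover have "\<lfloor>t\<rfloor> \<ge> 0" using assms by simp
  ultimately show ?case unfolding rinv_def nn_def dt_def by simp
next
  case (Suc k)
  define p where "p = fst (ray t k)"
  define q where "q = snd (ray t k)"
  have I: "rinv t k p q" using Suc p_def q_def by simp
  show ?case
  proof (cases "real_of_int (snd (vadd p q)) < t * real_of_int (fst (vadd p q))")
    case True
    then have r: "ray t (Suc k) = (vadd p q, q)" by (simp add: p_def q_def)
    have "dt (vadd p q) q = 1" using I dt_simps unfolding rinv_def by simp
    then show ?thesis using I True nn_vadd unfolding r rinv_def by (auto simp: vadd_def)
  next
    case False
    then have r: "ray t (Suc k) = (p, vadd p q)" by (simp add: p_def q_def)
    have "fst (vadd p q) \<noteq> 0" using I unfolding rinv_def vadd_def by simp
    then have "real_of_int (snd (vadd p q)) \<noteq> t * real_of_int (fst (vadd p q))"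
      using irr_neq[OF assms(2)] by blast
    then have "t * real_of_int (fst (vadd p q)) < real_of_int (snd (vadd p q))" using False by simp
    moreover have "dt p (vadd p q) = 1" using I dt_simps unfolding rinv_def by simp
    ultimately show ?thesis using I nn_vadd unfolding r rinv_def by (auto simp: vadd_def)
  qed
qed

lemma dt_coprime: assumes "dt u v = 1" shows "coprime (fst u) (snd u)" "coprime (fst v) (snd v)"
proof -
  have e: "fst u * snd v - fst v * snd u = 1" using assms unfolding dt_def by simp
  show "coprime (fst u) (snd u)"
  proof (rule coprimeI)
    fix d assume "d dvd fst u" "d dvd snd u"
    then have "d dvd fst u * snd v - fst v * snd u" by simp
    then show "is_unit d" using e by simp
  qed
  show "coprime (fst v) (snd v)"
  proof (rule coprimeI)
    fix d assume "d dvd fst v" "d dvd snd v"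
    then have "d dvd fst u * snd v - fst v * snd u" by simp
    then show "is_unit d" using e by simp
  qed
qed

lemma slope_between:
  assumes "rinv t k p q" "fst c > 0" "dt p c \<ge> 0" "dt c q \<ge> 0"
  shows "\<bar>real_of_int (snd c) / real_of_int (fst c) - t\<bar> \<le> 1 / real (k+1)"
proof -
  obtain a1 b1 a2 b2 a b where e: "p = (a1,b1)" "q = (a2,b2)" "c = (a,b)" by (metis prod.exhaust)
  have h: "a1 \<ge> 1" "a2 \<ge> 1" "a1*b2 - a2*b1 = 1" "real_of_int b1 < t * a1" "t * a2 < real_of_int b2"
    "a1 + a2 \<ge> int k + 2" "a1*b - a*b1 \<ge> 0" "a*b2 - a2*b \<ge> 0" "a > 0"
    using assms e unfolding rinv_def dt_def by auto
  define s1 where "s1 = real_of_int b1 / a1"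
  define s2 where "s2 = real_of_int b2 / a2"
  define s where "s = real_of_int b / a"
  have "s1 < t" using h unfolding s1_def by (simp add: field_simps)
  have "t < s2" using h unfolding s2_def by (simp add: field_simps)
  have "s1 \<le> s"
  proof -
    have "real_of_int (a*b1) \<le> real_of_int (a1*b)" using h(7) by linarith
    then show ?thesis using h unfolding s1_def s_def by (simp add: field_simps)
  qed
  have "s \<le> s2"
  proof -
    have "real_of_int (a2*b) \<le> real_of_int (a*b2)" using h(8) by linarith
    then show ?thesis using h unfolding s2_def s_def by (simp add: field_simps)
  qed
  have w: "s2 - s1 = 1 / (real_of_int a1 * real_of_int a2)"
  proof -
    have "real_of_int (a1*b2) = real_of_int (1 + a2*b1)" using h(3) by (simp add: algebra_simps)
    then have "real_of_int a1 * real_of_int b2 = 1 + real_of_int a2 * real_of_int b1" by simp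
    then show ?thesis unfolding s1_def s2_def using h by (simp add: field_simps)
  qed
  have "real_of_int (a1*a2) \<ge> real (k+1)"
  proof -
    have "(a1 - 1)*(a2 - 1) \<ge> 0" using h by simp
    then have "a1*a2 \<ge> a1 + a2 - 1" by (simp add: algebra_simps)
    then show ?thesis using h(6) by linarith
  qed
  then have "s2 - s1 \<le> 1 / real (k+1)" unfolding w by (simp add: frac_le)
  then show ?thesis using \<open>s1 < t\<close> \<open>t < s2\<close> \<open>s1 \<le> s\<close> \<open>s \<le> s2\<close> e unfolding s_def by simp
qed

lemma ErelD: "Erel f \<Longrightarrow> nn u \<Longrightarrow> nn v \<Longrightarrow> dt u v = 1 \<Longrightarrow> fst u \<ge> 1 \<Longrightarrow> fst v \<ge> 1 \<Longrightarrow>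
   f (vadd u v) + f (vdiff u v) = f u * f v"
  unfolding Erel_def by blast

lemma core:
  fixes f :: "int \<times> int \<Rightarrow> complex"
  assumes E: "Erel f"
    and V: "\<And>u v. nn u \<Longrightarrow> nn v \<Longrightarrow> dt u v = 1 \<Longrightarrow> Fr (f u) (f v) (f (vadd u v)) = \<mu>"
    and mu: "\<mu> \<noteq> 4" and t: "t > 0" "t \<notin> \<rat>"
    and Xinj: "inj X" and Xf: "\<And>n. fst (X n) > 0" and Xc: "\<And>n. coprime (fst (X n)) (snd (X n))"
    and Xlim: "(\<lambda>n. real_of_int (snd (X n)) / real_of_int (fst (X n))) \<longlonglongrightarrow> t"
    and XK: "\<And>n. snd (X n) > 0 \<Longrightarrow> cmod (f (X n)) < K"
    and eps: "\<epsilon> > 0"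
  shows "\<exists>c. fst c > 0 \<and> snd c > 0 \<and> coprime (fst c) (snd c) \<and>
     \<bar>real_of_int (snd c) / real_of_int (fst c) - t\<bar> < \<epsilon> \<and> cmod (f c) \<le> 2"
proof (rule ccontr)
  assume "\<not> ?thesis"
  then have H: "\<And>c. fst c > 0 \<Longrightarrow> snd c > 0 \<Longrightarrow> coprime (fst c) (snd c) \<Longrightarrow>
     \<bar>real_of_int (snd c) / real_of_int (fst c) - t\<bar> < \<epsilon> \<Longrightarrow> cmod (f c) > 2"
    by force
  define P where "P k = fst (ray t k)" for k
  define Q where "Q k = snd (ray t k)" for k
  have RI: "rinv t k (P k) (Q k)" for k unfolding P_def Q_def by (rule ray_inv[OF t])
  obtain k0 :: nat where k0: "1 / real (k0+1) < min \<epsilon> t"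
  proof -
    obtain n where "inverse (real (Suc n)) < min \<epsilon> t" using reals_Archimedean[of "min \<epsilon> t"] eps t by auto
    then show ?thesis using that[of n] by (simp add: inverse_eq_divide)
  qed
  have big: "cmod (f c) > 2" if "k \<ge> k0" "c = P k \<or> c = Q k" for k c
  proof -
    have r: "rinv t k (P k) (Q k)" by (rule RI)
    have "dt (P k) (P k) = 0" "dt (Q k) (Q k) = 0" unfolding dt_def by simp_all
    then have "dt (P k) c \<ge> 0" "dt c (Q k) \<ge> 0" using that r unfolding rinv_def by auto
    moreover have fc: "fst c > 0" using that r unfolding rinv_def by auto
    ultimately have sl: "\<bar>real_of_int (snd c) / real_of_int (fst c) - t\<bar> \<le> 1 / real (k+1)"
      using slope_between[OF r] by blast
    have "1 / real (k+1) \<le> 1 / real (k0+1)" using that by (simp add: frac_le)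
    then have sl2: "\<bar>real_of_int (snd c) / real_of_int (fst c) - t\<bar> < min \<epsilon> t" using sl k0 by linarith
    then have "real_of_int (snd c) / real_of_int (fst c) > 0" by linarith
    then have "snd c > 0" using fc by (simp add: zero_less_divide_iff)
    moreover have "coprime (fst c) (snd c)"
    proof -
      have "dt (P k) (Q k) = 1" using r unfolding rinv_def by auto
      then show ?thesis using dt_coprime[of "P k" "Q k"] that(2) by auto
    qed
    ultimately show ?thesis using H fc sl2 by simp
  qed
  show False
  proof (cases "\<exists>k\<ge>k0. cmod (f (vadd (P k) (Q k))) \<ge> cmod (f (vdiff (P k) (Q k)))")
    case True
    then obtain k where k: "k \<ge> k0" "cmod (f (vadd (P k) (Q k))) \<ge> cmod (f (vdiff (P k) (Q k)))" by blast
    define p where "p = P k"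
    define q where "q = Q k"
    have r: "rinv t k p q" using RI p_def q_def by simp
    define c0 where "c0 = min (cmod (f p)) (cmod (f q))"
    define S where "S = max (sz p) (sz q)"
    have c02: "c0 > 2" using big[OF k(1)] unfolding c0_def p_def q_def by simp
    have S0: "S \<ge> 0" using r unfolding S_def sz_def rinv_def nn_def by auto
    have Pgb: "Pg f c0 S c" if "sz c \<le> S" for c
      unfolding Pg_def
    proof (intro allI impI)
      fix j :: nat assume "2^j * S < sz c"
      moreover have "S \<le> 2^j * S" using S0 by (simp add: mult_le_cancel_right1)
      ultimately show "c0 * (c0/2)^j \<le> cmod (f c)" using that by simp
    qed
    have I: "Inv f c0 S p q" unfolding Inv_def
      using r k(2) Pgb[of p] Pgb[of q] unfolding rinv_def c0_def S_def p_def q_def by auto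
    obtain j :: nat where j: "K / c0 < (c0/2)^j" using real_arch_pow[of "c0/2"] c02 by auto
    have jK: "K < c0 * (c0/2)^j" using j c02 by (simp add: field_simps)
    define M where "M = 2^j * S"
    have slp: "real_of_int (snd p) / real_of_int (fst p) < t" "t < real_of_int (snd q) / real_of_int (fst q)"
      using r unfolding rinv_def by (auto simp: field_simps)
    obtain N where N: "\<And>n. n \<ge> N \<Longrightarrow> real_of_int (snd p) / real_of_int (fst p) < real_of_int (snd (X n)) / real_of_int (fst (X n))
         \<and> real_of_int (snd (X n)) / real_of_int (fst (X n)) < real_of_int (snd q) / real_of_int (fst q)"
    proof -
      have "\<forall>\<^sub>F n in sequentially. real_of_int (snd p) / real_of_int (fst p) < real_of_int (snd (X n)) / real_of_int (fst (X n))"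
        using Xlim slp(1) by (rule order_tendstoD)
      moreover have "\<forall>\<^sub>F n in sequentially. real_of_int (snd (X n)) / real_of_int (fst (X n)) < real_of_int (snd q) / real_of_int (fst q)"
        using Xlim slp(2) by (rule order_tendstoD)
      ultimately have "\<forall>\<^sub>F n in sequentially. real_of_int (snd p) / real_of_int (fst p) < real_of_int (snd (X n)) / real_of_int (fst (X n))
         \<and> real_of_int (snd (X n)) / real_of_int (fst (X n)) < real_of_int (snd q) / real_of_int (fst q)"
        by (rule eventually_conj)
      then show ?thesis using that unfolding eventually_sequentially by blast
    qed
    define F where "F = {0..M} \<times> {0..M}"
    have "finite F" unfolding F_def by simp
    moreover have "infinite (X ` {N..})"
    proof
      assume "finite (X ` {N..})"
      then have "finite {N..}" using finite_image_iff[of X "{N..}"] inj_on_subset[OF Xinj] by blast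
      then obtain b where "\<forall>n\<in>{N..}. n \<le> b" using finite_nat_set_iff_bounded_le by blast
      moreover have "Suc (max b N) \<in> {N..}" by simp
      ultimately have "Suc (max b N) \<le> b" by blast
      then show False by simp
    qed
    ultimately have "\<not> X ` {N..} \<subseteq> F" using finite_subset by blast
    then obtain n where n: "n \<ge> N" "X n \<notin> F" by (meson atLeast_iff image_subsetI)
    define c where "c = X n"
    have dp: "dt p c > 0" and dq: "dt c q > 0"
    proof -
      have fp: "fst p > 0" "fst q > 0" "fst c > 0" using r Xf c_def unfolding rinv_def by auto
      have A: "real_of_int (snd p) / real_of_int (fst p) < real_of_int (snd c) / real_of_int (fst c)"
           "real_of_int (snd c) / real_of_int (fst c) < real_of_int (snd q) / real_of_int (fst q)"
        using N[OF n(1)] c_def by auto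
      have "real_of_int (snd p * fst c) < real_of_int (snd c * fst p)" using A(1) fp by (simp add: field_simps)
      then have "snd p * fst c < snd c * fst p" by (simp only: of_int_less_iff)
      then show "dt p c > 0" unfolding dt_def by (simp add: algebra_simps)
      have "real_of_int (snd c * fst q) < real_of_int (snd q * fst c)" using A(2) fp by (simp add: field_simps)
      then have "snd c * fst q < snd q * fst c" by (simp only: of_int_less_iff)
      then show "dt c q > 0" unfolding dt_def by (simp add: algebra_simps)
    qed
    have sc: "snd c > 0"
    proof -
      have "fst p * snd c > fst c * snd p" using dp unfolding dt_def by simp
      moreover have "fst c * snd p \<ge> 0"
      proof -
        have "fst c \<ge> 0" "snd p \<ge> 0" using r Xf[of n] c_def unfolding rinv_def nn_def by auto
        then show ?thesis by simp
      qed
      ultimately have "fst p * snd c > 0" by simp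
      then show ?thesis using r unfolding rinv_def by (simp add: zero_less_mult_iff)
    qed
    have "sz c > M"
    proof -
      have "fst c > M \<or> snd c > M"
      proof (rule ccontr)
        assume "\<not> ?thesis"
        then have "c \<in> F" using Xf[of n] sc unfolding F_def c_def by (cases "X n") auto
        then show False using n(2) c_def by simp
      qed
      then show ?thesis using Xf[of n] sc unfolding sz_def c_def by auto
    qed
    have "cmod (f c) \<ge> c0 \<and> Pg f c0 S c"
      by (rule growth[OF E _ I]) (use c02 Xc c_def dp dq in auto)
    then have "cmod (f c) \<ge> c0 * (c0/2)^j" using \<open>sz c > M\<close> unfolding Pg_def M_def by blast
    moreover have "cmod (f c) < K" using XK sc c_def by blast
    ultimately show False using jK by simp
  next
    case False
    define x where "x k = f (P (k + k0))" for k
    define y where "y k = f (Q (k + k0))" for k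
    define m where "m k = f (vadd (P (k + k0)) (Q (k + k0)))" for k
    define d where "d k = f (vdiff (P (k + k0)) (Q (k + k0)))" for k
    have "\<mu> = 4"
    proof (rule caseB[of m d x y])
      fix k
      have r: "rinv t (k+k0) (P (k+k0)) (Q (k+k0))" by (rule RI)
      have rr: "nn (P (k+k0))" "nn (Q (k+k0))" "dt (P (k+k0)) (Q (k+k0)) = 1" "fst (P (k+k0)) \<ge> 1" "fst (Q (k+k0)) \<ge> 1"
        using r unfolding rinv_def by auto
      show "m k + d k = x k * y k" unfolding m_def d_def x_def y_def by (rule ErelD[OF E rr])
      show "Fr (x k) (y k) (m k) = \<mu>" unfolding m_def x_def y_def by (rule V[OF rr(1-3)])
      show "cmod (x k) > 2" unfolding x_def by (rule big[of "k+k0"]) simp_all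
      show "cmod (y k) > 2" unfolding y_def by (rule big[of "k+k0"]) simp_all
      have "k + k0 \<ge> k0" by simp
      then show "cmod (m k) < cmod (d k)" using False unfolding m_def d_def by (meson not_le)
      have nP: "nn (P (k+k0))" "nn (Q (k+k0))" using r unfolding rinv_def by auto
      show "(x (Suc k) = x k \<and> y (Suc k) = m k \<and> d (Suc k) = y k) \<or>
            (x (Suc k) = m k \<and> y (Suc k) = y k \<and> d (Suc k) = x k)"
      proof (cases "real_of_int (snd (vadd (P (k+k0)) (Q (k+k0)))) < t * real_of_int (fst (vadd (P (k+k0)) (Q (k+k0))))")
        case True
        then have "P (Suc k + k0) = vadd (P (k+k0)) (Q (k+k0))" "Q (Suc k + k0) = Q (k+k0)"
          unfolding P_def Q_def by simp_all
        then show ?thesis using vdiff_R[OF nP(1)] unfolding x_def y_def m_def d_def by simp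
      next
        case False
        then have "P (Suc k + k0) = P (k+k0)" "Q (Suc k + k0) = vadd (P (k+k0)) (Q (k+k0))"
          unfolding P_def Q_def by simp_all
        then show ?thesis using vdiff_L[OF nP(2)] unfolding x_def y_def m_def d_def by simp
      qed
    qed
    then show False using mu by simp
  qed
qed

lemma floor_conv:
  assumes "a + c > 0"
  shows "\<lfloor>real i * real_of_int c / real (nat (a + c))\<rfloor> = (int i * c) div (a + c)"
        "\<lfloor>(real i - 1) * real_of_int c / real (nat (a + c))\<rfloor> = ((int i - 1) * c) div (a + c)"
proof -
  have n: "real (nat (a + c)) = real_of_int (a + c)" using assms by simp
  have "real i * real_of_int c = real_of_int (int i * c)" by simp
  then show "\<lfloor>real i * real_of_int c / real (nat (a + c))\<rfloor> = (int i * c) div (a + c)"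
    unfolding n by (metis floor_divide_of_int_eq)
  have "(real i - 1) * real_of_int c = real_of_int ((int i - 1) * c)" by simp
  then show "\<lfloor>(real i - 1) * real_of_int c / real (nat (a + c))\<rfloor> = ((int i - 1) * c) div (a + c)"
    unfolding n by (metis floor_divide_of_int_eq)
qed

lemma curve_word_pos:
  assumes "a > 0" "b \<ge> 0"
  shows "curve_word (a,b) = cw (a,b)"
proof -
  have "\<bar>b\<bar> = b" using assms by simp
  then show ?thesis using assms floor_conv[of a b]
    unfolding curve_word_def cw_def cl_def by (simp add: Let_def)
qed

lemma eval_swap: "eval_word A B (map (\<lambda>i. if P i then LYi else LX) xs) =
    eval_word A (sl2_inv B) (map (\<lambda>i. if P i then LY else LX) xs)"
  by (induction xs) (simp_all add: eval_word_def)

lemma curve_word_neg: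
  assumes "a > 0" "b < 0"
  shows "eval_word A B (curve_word (a,b)) = eval_word A (sl2_inv B) (cw (a,-b))"
proof -
  define P where "P i = (((int i - 1) * (-b)) div (a + (-b)) < (int i * (-b)) div (a + (-b)))" for i :: nat
  have "\<bar>b\<bar> = -b" using assms by simp
  then have c1: "curve_word (a,b) = map (\<lambda>i. if P i then LYi else LX) [1..<nat (a + (-b)) + 1]"
    using assms floor_conv[of a "-b"] unfolding curve_word_def P_def by (simp add: Let_def)
  have c2: "cw (a,-b) = map (\<lambda>i. if P i then LY else LX) [1..<nat (a + (-b)) + 1]"
    unfolding cw_def cl_def P_def by simp
  show ?thesis unfolding c1 c2 by (rule eval_swap)
qed

lemma tr_curve_pos: "a > 0 \<Longrightarrow> b \<ge> 0 \<Longrightarrow> tr_curve A B (a,b) = ff A B (a,b)"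
  unfolding tr_curve_def ff_def Mw_def by (simp add: curve_word_pos)

lemma tr_curve_neg: "a > 0 \<Longrightarrow> b < 0 \<Longrightarrow> tr_curve A B (a,b) = ff A (sl2_inv B) (a,-b)"
  unfolding tr_curve_def ff_def Mw_def by (simp add: curve_word_neg)

lemma comm_eval: "eval_word A B [LX, LY, LXi, LYi] = A ** (B ** (sl2_inv A ** (sl2_inv B ** mat 1)))"
  by (simp add: eval_word_def)

lemma markoff_data:
  assumes "det A = 1" "det B = 1" "trace (A ** (B ** (sl2_inv A ** (sl2_inv B ** mat 1)))) = \<kappa>"
  shows "Erel (ff A B)"
    "\<And>u v. nn u \<Longrightarrow> nn v \<Longrightarrow> dt u v = 1 \<Longrightarrow> Fr (ff A B u) (ff A B v) (ff A B (vadd u v)) = \<kappa> + 2"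
  using E_rel[OF assms(1,2)] V_rel[OF assms(1,2)] assms(3) unfolding Erel_def by auto

definition rs :: "int \<times> int \<Rightarrow> real" where
  "rs c = real_of_int (snd c) / real_of_int (fst c)"

lemma slope_some: "fst c \<noteq> 0 \<Longrightarrow> slope c = Some (rs c)"
  unfolding slope_def rs_def by (cases c) auto

lemma pl_inv: "fst (pl_emb (Some s)) / (1 - snd (pl_emb (Some s))) = s"
proof -
  have p: "1 + s^2 > 0" by (simp add: add_pos_nonneg)
  have "1 - (s^2 - 1) / (1 + s^2) = 2 / (1 + s^2)" using p by (simp add: field_simps)
  then show ?thesis unfolding pl_emb_def using p by (simp add: field_simps)
qed

lemma pl_snd_lt: "snd (pl_emb (Some s)) < 1"
proof -
  have p: "1 + s^2 > 0" by (simp add: add_pos_nonneg)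
  then show ?thesis unfolding pl_emb_def by (simp add: field_simps)
qed

lemma PL1:
  assumes cur: "\<And>n. c n \<in> curves" and lim: "pl_tendsto (\<lambda>n. slope (c n)) (Some t)"
  shows "\<exists>N. (\<forall>n\<ge>N. fst (c n) > 0) \<and> (\<lambda>n. rs (c n)) \<longlonglongrightarrow> t"
proof -
  let ?e = "\<lambda>n. pl_emb (slope (c n))"
  have L: "?e \<longlonglongrightarrow> pl_emb (Some t)" using lim unfolding pl_tendsto_def .
  have "\<forall>\<^sub>F n in sequentially. snd (?e n) < 1"
    using tendsto_snd[OF L] pl_snd_lt[of t] by (rule order_tendstoD)
  then obtain N where N: "\<And>n. n \<ge> N \<Longrightarrow> snd (?e n) < 1" unfolding eventually_sequentially by blast
  have fpos: "fst (c n) > 0" if "n \<ge> N" for n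
  proof -
    have "fst (c n) \<noteq> 0"
    proof
      assume "fst (c n) = 0"
      then have "slope (c n) = None" unfolding slope_def by (cases "c n") auto
      then show False using N[OF that] unfolding pl_emb_def by simp
    qed
    moreover have "fst (c n) > 0 \<or> fst (c n) = 0" using cur[of n] unfolding curves_def by (cases "c n") auto
    ultimately show ?thesis by simp
  qed
  have "(\<lambda>n. fst (?e n) / (1 - snd (?e n))) \<longlonglongrightarrow> fst (pl_emb (Some t)) / (1 - snd (pl_emb (Some t)))"
    using pl_snd_lt[of t] by (intro tendsto_intros L) auto
  then have T: "(\<lambda>n. fst (?e n) / (1 - snd (?e n))) \<longlonglongrightarrow> t" unfolding pl_inv .
  have "\<forall>\<^sub>F n in sequentially. fst (?e n) / (1 - snd (?e n)) = rs (c n)"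
    unfolding eventually_sequentially
  proof (intro exI allI impI)
    fix n assume "n \<ge> N"
    then have "fst (c n) \<noteq> 0" using fpos by fastforce
    then have "slope (c n) = Some (rs (c n))" by (rule slope_some)
    then show "fst (?e n) / (1 - snd (?e n)) = rs (c n)" using pl_inv[of "rs (c n)"] by simp
  qed
  then have "(\<lambda>n. rs (c n)) \<longlonglongrightarrow> t" by (rule Lim_transform_eventually[OF T])
  then show ?thesis using fpos by blast
qed

lemma PL2:
  assumes "(\<lambda>n. rs (c n)) \<longlonglongrightarrow> t" "\<And>n. fst (c n) \<noteq> 0"
  shows "pl_tendsto (\<lambda>n. slope (c n)) (Some t)"
proof -
  have e: "pl_emb (slope (c n)) = (2 * rs (c n) / (1 + (rs (c n))\<^sup>2), ((rs (c n))\<^sup>2 - 1) / (1 + (rs (c n))\<^sup>2))" for n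
    using slope_some[OF assms(2)[of n]] unfolding pl_emb_def by simp
  have p: "1 + t^2 \<noteq> 0" by (metis add_pos_nonneg zero_le_power2 zero_less_one less_irrefl)
  have "(\<lambda>n. (2 * rs (c n) / (1 + (rs (c n))\<^sup>2), ((rs (c n))\<^sup>2 - 1) / (1 + (rs (c n))\<^sup>2)))
      \<longlonglongrightarrow> (2 * t / (1 + t\<^sup>2), (t\<^sup>2 - 1) / (1 + t\<^sup>2))"
    using p by (intro tendsto_intros assms(1)) auto
  moreover have "pl_emb (Some t) = (2 * t / (1 + t\<^sup>2), (t\<^sup>2 - 1) / (1 + t\<^sup>2))"
    unfolding pl_emb_def by simp
  ultimately show ?thesis unfolding pl_tendsto_def e by simp
qed

lemma G_claim:
  assumes k2: "\<kappa> \<noteq> 2" and dA: "det A = 1" and dB: "det B = 1"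
    and kap: "trace (A ** (B ** (sl2_inv A ** (sl2_inv B ** mat 1)))) = \<kappa>"
    and t0: "t \<noteq> 0" and tQ: "t \<notin> \<rat>"
    and Xinj: "inj X" and Xf: "\<And>n. fst (X n) > 0" and Xc: "\<And>n. coprime (fst (X n)) (snd (X n))"
    and Xlim: "(\<lambda>n. rs (X n)) \<longlonglongrightarrow> t"
    and XK: "\<And>n. cmod (tr_curve A B (X n)) < K"
    and eps: "\<epsilon> > 0"
  shows "\<exists>c. c \<in> curves \<and> fst c > 0 \<and> \<bar>rs c - t\<bar> < \<epsilon> \<and> cmod (tr_curve A B c) \<le> 2"
proof -
  have mu: "\<kappa> + 2 \<noteq> 4" using k2 by (metis add_diff_cancel_right' numeral_Bit0 one_plus_numeral one_add_one)
  show ?thesis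
  proof (cases "t > 0")
    case True
    note md = markoff_data[OF dA dB kap]
    have "\<exists>c. fst c > 0 \<and> snd c > 0 \<and> coprime (fst c) (snd c) \<and>
       \<bar>real_of_int (snd c) / real_of_int (fst c) - t\<bar> < \<epsilon> \<and> cmod (ff A B c) \<le> 2"
    proof (rule core[OF md(1) md(2) mu True tQ Xinj Xf Xc _ _ eps])
      show "(\<lambda>n. real_of_int (snd (X n)) / real_of_int (fst (X n))) \<longlonglongrightarrow> t"
        using Xlim unfolding rs_def .
      fix n assume "snd (X n) > 0"
      then have "tr_curve A B (X n) = ff A B (X n)"
        using tr_curve_pos[of "fst (X n)" "snd (X n)"] Xf[of n] by simp
      then show "cmod (ff A B (X n)) < K" using XK[of n] by simp
    qed
    then obtain c where c: "fst c > 0" "snd c > 0" "coprime (fst c) (snd c)"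
       "\<bar>rs c - t\<bar> < \<epsilon>" "cmod (ff A B c) \<le> 2" unfolding rs_def by blast
    have "c \<in> curves" using c unfolding curves_def by (cases c) auto
    moreover have "tr_curve A B c = ff A B c"
      using tr_curve_pos[of "fst c" "snd c"] c by simp
    ultimately show ?thesis using c by (metis)
  next
    case False
    then have tn: "-t > 0" using t0 by simp
    have tQ': "-t \<notin> \<rat>" using tQ by (metis Rats_minus_iff)
    define B' where "B' = sl2_inv B"
    have dB': "det B' = 1" unfolding B'_def using dB det_inv by simp
    have kap': "trace (A ** (B' ** (sl2_inv A ** (sl2_inv B' ** mat 1)))) = \<kappa>"
    proof -
      have "sl2_inv B' = sl2_inv (sl2_inv B)" unfolding B'_def ..
      then show ?thesis unfolding B'_def using comm_inv[OF dA dB] kap by simp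
    qed
    note md = markoff_data[OF dA dB' kap']
    define X' where "X' n = (fst (X n), - snd (X n))" for n
    have X'inj: "inj X'"
    proof (rule injI)
      fix m n assume "X' m = X' n"
      then have "X m = X n" unfolding X'_def by (simp add: prod_eq_iff)
      then show "m = n" using Xinj by (simp add: inj_eq)
    qed
    have X'f: "fst (X' n) > 0" for n unfolding X'_def using Xf by simp
    have X'c: "coprime (fst (X' n)) (snd (X' n))" for n unfolding X'_def using Xc by simp
    have X'lim: "(\<lambda>n. real_of_int (snd (X' n)) / real_of_int (fst (X' n))) \<longlonglongrightarrow> -t"
    proof -
      have "(\<lambda>n. - rs (X n)) \<longlonglongrightarrow> -t" using Xlim by (rule tendsto_minus)
      moreover have "- rs (X n) = real_of_int (snd (X' n)) / real_of_int (fst (X' n))" for n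
        unfolding rs_def X'_def by simp
      ultimately show ?thesis by simp
    qed
    have "\<exists>c. fst c > 0 \<and> snd c > 0 \<and> coprime (fst c) (snd c) \<and>
       \<bar>real_of_int (snd c) / real_of_int (fst c) - (-t)\<bar> < \<epsilon> \<and> cmod (ff A B' c) \<le> 2"
    proof (rule core[OF md(1) md(2) mu tn tQ' X'inj X'f X'c X'lim _ eps])
      fix n assume "snd (X' n) > 0"
      then have "snd (X n) < 0" unfolding X'_def by simp
      then have "tr_curve A B (X n) = ff A B' (X' n)"
        using tr_curve_neg[of "fst (X n)" "snd (X n)"] Xf[of n] unfolding B'_def X'_def by simp
      then show "cmod (ff A B' (X' n)) < K" using XK[of n] by simp
    qed
    then obtain c where c: "fst c > 0" "snd c > 0" "coprime (fst c) (snd c)"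
       "\<bar>real_of_int (snd c) / real_of_int (fst c) + t\<bar> < \<epsilon>" "cmod (ff A B' c) \<le> 2" by auto
    define c' where "c' = (fst c, - snd c)"
    have "c' \<in> curves" using c unfolding curves_def c'_def by simp
    moreover have "tr_curve A B c' = ff A B' c"
      using tr_curve_neg[of "fst c" "- snd c"] c unfolding c'_def B'_def by simp
    moreover have "\<bar>rs c' - t\<bar> < \<epsilon>"
    proof -
      have "rs c' - t = - (real_of_int (snd c) / real_of_int (fst c) + t)" unfolding rs_def c'_def by simp
      then show ?thesis using c(4) by simp
    qed
    moreover have "fst c' > 0" using c unfolding c'_def by simp
    ultimately show ?thesis using c by metis
  qed
qed

lemma rs_irr: "t \<notin> \<rat> \<Longrightarrow> rs c \<noteq> t"
  unfolding rs_def by auto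

theorem proposition5p1:
  fixes \<kappa> :: complex and A B :: "complex^2^2" and lam :: PL
  assumes "\<kappa> \<noteq> 2"
    and "in_X_kappa \<kappa> A B"
    and "end_invariant A B lam"
    and "lam \<notin> slope ` curves"
  shows "\<exists>Z :: nat \<Rightarrow> int \<times> int. inj Z \<and> (\<forall>n. Z n \<in> curves) \<and>
           pl_tendsto (\<lambda>n. slope (Z n)) lam \<and> (\<forall>n. cmod (tr_curve A B (Z n)) \<le> 2)"
proof -
  obtain K Xs where K: "inj Xs" "\<And>n. Xs n \<in> curves" "pl_tendsto (\<lambda>n. slope (Xs n)) lam"
      "\<And>n. cmod (tr_curve A B (Xs n)) < K"
    using assms(3) unfolding end_invariant_def by blast
  have dA: "det A = 1" and dB: "det B = 1"
    and kap: "trace (A ** (B ** (sl2_inv A ** (sl2_inv B ** mat 1)))) = \<kappa>"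
    using assms(2) unfolding in_X_kappa_def SL2_def comm_eval by auto
  have c01: "(0,1) \<in> curves" unfolding curves_def by simp
  have c10: "(1,0) \<in> curves" unfolding curves_def by simp
  obtain t where lamt: "lam = Some t"
  proof (cases lam)
    case None
    have "slope (0,1) = None" unfolding slope_def by simp
    then have "lam \<in> slope ` curves" using None c01 by force
    then show ?thesis using assms(4) by simp
  next
    case (Some s) then show ?thesis using that by simp
  qed
  have t0: "t \<noteq> 0"
  proof
    assume "t = 0"
    have "slope (1,0) = Some 0" unfolding slope_def by simp
    then have "lam \<in> slope ` curves" using \<open>t = 0\<close> lamt c10 by force
    then show False using assms(4) by simp
  qed
  have tQ: "t \<notin> \<rat>"
  proof
    assume "t \<in> \<rat>"
    then obtain a b :: int where ab: "b > 0" "coprime a b" "t = of_int a / of_int b" by (rule Rats_cases')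
    have "(b,a) \<in> curves" using ab unfolding curves_def by (simp add: coprime_commute)
    moreover have "slope (b,a) = lam" unfolding slope_def using ab lamt by simp
    ultimately have "lam \<in> slope ` curves" by force
    then show False using assms(4) by simp
  qed
  obtain N where N: "\<And>n. n \<ge> N \<Longrightarrow> fst (Xs n) > 0" and Xl: "(\<lambda>n. rs (Xs n)) \<longlonglongrightarrow> t"
    using PL1[OF K(2) K(3)[unfolded lamt]] by blast
  define X where "X n = Xs (n + N)" for n
  have Xinj: "inj X"
  proof (rule injI)
    fix m n assume "X m = X n"
    then have "m + N = n + N" using K(1) unfolding X_def by (simp add: inj_eq)
    then show "m = n" by simp
  qed
  have Xf: "fst (X n) > 0" for n unfolding X_def using N by simp
  have Xc: "coprime (fst (X n)) (snd (X n))" for n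
    using K(2)[of "n+N"] unfolding X_def curves_def by (cases "Xs (n+N)") auto
  have Xlim: "(\<lambda>n. rs (X n)) \<longlonglongrightarrow> t" unfolding X_def using Xl by (rule LIMSEQ_ignore_initial_segment)
  have XK: "cmod (tr_curve A B (X n)) < K" for n unfolding X_def by (rule K(4))
  define good where "good e c \<longleftrightarrow> c \<in> curves \<and> fst c > 0 \<and> \<bar>rs c - t\<bar> < e \<and> cmod (tr_curve A B c) \<le> 2"
    for e c
  have G: "\<exists>c. good e c" if "e > 0" for e
    using G_claim[OF assms(1) dA dB kap t0 tQ Xinj Xf Xc Xlim XK that] unfolding good_def by blast
  define pick where "pick e = (SOME c. good e c)" for e
  have pick: "good e (pick e)" if "e > 0" for e unfolding pick_def using G[OF that] by (rule someI_ex)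
  define Z where "Z = rec_nat (pick 1) (\<lambda>n z. pick (min (1 / (real n + 2)) \<bar>rs z - t\<bar>))"
  have Z0: "Z 0 = pick 1" unfolding Z_def by simp
  have ZS: "Z (Suc n) = pick (min (1 / (real n + 2)) \<bar>rs (Z n) - t\<bar>)" for n unfolding Z_def by simp
  have Zg: "good (1 / (real n + 1)) (Z n)" for n
  proof (induction n)
    case 0 then show ?case using pick[of 1] Z0 by simp
  next
    case (Suc n)
    have "\<bar>rs (Z n) - t\<bar> > 0" using rs_irr[OF tQ] by simp
    then have g: "good (min (1 / (real n + 2)) \<bar>rs (Z n) - t\<bar>) (Z (Suc n))" using pick ZS by simp
    have "real (Suc n) + 1 = real n + 2" by simp
    then have "min (1 / (real n + 2)) \<bar>rs (Z n) - t\<bar> \<le> 1 / (real (Suc n) + 1)" by (simp only: min.cobounded1)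
    then show ?case using g unfolding good_def by linarith
  qed
  have Zdec: "\<bar>rs (Z (Suc n)) - t\<bar> < \<bar>rs (Z n) - t\<bar>" for n
  proof -
    have "\<bar>rs (Z n) - t\<bar> > 0" using rs_irr[OF tQ] by simp
    then have g: "good (min (1 / (real n + 2)) \<bar>rs (Z n) - t\<bar>) (Z (Suc n))" using pick ZS by simp
    have "min (1 / (real n + 2)) \<bar>rs (Z n) - t\<bar> \<le> \<bar>rs (Z n) - t\<bar>" by simp
    then show ?thesis using g unfolding good_def by linarith
  qed
  have Zlt: "\<bar>rs (Z n) - t\<bar> < \<bar>rs (Z m) - t\<bar>" if "m < n" for m n
    using that
  proof (induction n)
    case 0 then show ?case by simp
  next
    case (Suc n)
    show ?case
    proof (cases "m = n")
      case True then show ?thesis using Zdec[of n] by simp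
    next
      case False
      then have "m < n" using Suc.prems by simp
      then show ?thesis using Suc.IH Zdec[of n] by linarith
    qed
  qed
  have Zinj: "inj Z"
  proof (rule injI)
    fix m n assume e: "Z m = Z n"
    show "m = n"
    proof (rule ccontr)
      assume "m \<noteq> n"
      then have "m < n \<or> n < m" by (simp add: linorder_neq_iff)
      then show False using Zlt[of m n] Zlt[of n m] e by (metis less_irrefl)
    qed
  qed
  have Zc: "Z n \<in> curves" for n using Zg[of n] unfolding good_def by simp
  have Ztr: "cmod (tr_curve A B (Z n)) \<le> 2" for n using Zg[of n] unfolding good_def by simp
  have Zlim: "(\<lambda>n. rs (Z n)) \<longlonglongrightarrow> t"
  proof -
    have i: "(\<lambda>n. inverse (real (Suc n))) \<longlonglongrightarrow> 0" by (rule LIMSEQ_inverse_real_of_nat)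
    have b: "norm (rs (Z n) - t) \<le> inverse (real (Suc n))" for n
    proof -
      have lt: "\<bar>rs (Z n) - t\<bar> < 1 / (real n + 1)" using Zg[of n] unfolding good_def by blast
      have "real (Suc n) = real n + 1" by (rule of_nat_Suc[THEN trans, OF add.commute])
      then have e: "inverse (real (Suc n)) = 1 / (real n + 1)" by (simp only: inverse_eq_divide)
      show ?thesis unfolding real_norm_def e using lt by linarith
    qed
    have "(\<lambda>n. rs (Z n) - t) \<longlonglongrightarrow> 0"
      by (rule Lim_null_comparison[OF _ i]) (use b in \<open>simp add: eventually_sequentially\<close>)
    then show ?thesis by (rule LIM_zero_cancel)
  qed
  have "pl_tendsto (\<lambda>n. slope (Z n)) (Some t)"
  proof (rule PL2[OF Zlim])
    fix n show "fst (Z n) \<noteq> 0" using Zg[of n] unfolding good_def by simp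
  qed
  then have "pl_tendsto (\<lambda>n. slope (Z n)) lam" using lamt by simp
  then show ?thesis using Zinj Zc Ztr by blast
qed

end
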